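(* Suppose Assumption 1 (context) holds, let $u^*$ be any minimizer of $D$, and let $0\le K_0\le K$ be integers. For ARDCA as in the context, with $\hat x^K=\frac{\sum_{k=K_0}^Kx^*(v^k)/\theta_k}{\sum_{k=K_0}^K1/\theta_k}$ and $\hat y^K=\frac{\sum_{k=K_0}^Kny^k/\theta_k}{\sum_{k=K_0}^K1/\theta_k}$, $$\sqrt{\mathbb{E}_{\xi_K}\left[\left(\|\widetilde\triangle(\hat x^K,\hat y^K)\|_L^*\right)^2\right]}\le\frac{\sqrt{48}\,\widehat n^2\sqrt{(1-\theta_0)(D(u^0)-D(u^* ))+\|u^0-u^*\|_L^2}}{\frac1{\theta_K^2}-\frac1{\theta_{K_0-1}^2}},$$ where $\widetilde\triangle(x,y)=[(A^Tx-y)^T/n,(Bx+b)^T,\max\{0,g_1(x)\},\dots,\max\{0,g_m(x)\}]^T$.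
   Context: Data: integers $n,t\ge1$, $p,m\ge0$; $A\in\mathbb{R}^{t\times n}$ (columns $A_j$), $B\in\mathbb{R}^{p\times t}$ (rows $B_{j,:}$), $b\in\mathbb{R}^p$; $f,\phi_i,g_i$ real-valued. Assumption 1: $f$ $\mu$-strongly convex ($\mu>0$); $\phi_i$ convex, $M$-Lipschitz; $g_i$ convex with subgradients of norm $\le L_{g_i}$; there is $\bar x$ with $g_i(\bar x)<0$ and $B\bar x+b=0$; the problem $\min f(x)+\frac1n\sum\phi_i(A_i^Tx)$ s.t. $Bx+b=0$, $g_i(x)\le0$ has finite optimal value. Dual: $\widehat n=n+p+m$, $\mathbb{D}=\{u:u_{n+p+1},\dots,u_{\widehat n}\ge0\}$, $L_f(x,u)=f(x)+\langle u_{1:n},A^Tx/n\rangle+\langle u_{n+1:n+p},Bx+b\rangle+\sum_iu_{n+p+i}g_i(x)$, $x^*(u)=\arg\min_xL_f(x,u)$, $d(u)=-L_f(x^*(u),u)$; $h_i=\frac1n\phi_i^*$ ($i\le n$), $h_i\equiv0$ ($n<i\le n+p$), $h_i$ = indicator of $[0,\infty)$ ($i>n+p$); $D(u)=d(u)+\sum_ih_i(u_i)$. $L_j=\|A_j\|^2/(n^2\mu)$ ($j\le n$), $\|B_{j-n,:}\|^2/\mu$ ($n<j\le n+p$), $L_{g_{j-n-p}}^2/\mu$ ($j>n+p$); $\|w\|_L=\sqrt{\sum_iL_iw_i^2}$, $\|w\|_L^*=\sqrt{\sum_iw_i^2/L_i}$. ARDCA: $\theta_0=1/\widehat n$, $\theta_{k+1}=\frac{\sqrt{\theta_k^4+4\theta_k^2}-\theta_k^2}{2}$,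 convention $1/\theta_{-1}^2=\widehat n^2-\widehat n$; $z^0=u^0\in\mathbb{D}$; $v^k=\theta_kz^k+(1-\theta_k)u^k$; $\tilde z_i^k=\arg\min_w\widehat n\theta_kL_i(w-z_i^k)^2+\nabla_id(v^k)(w-z_i^k)+h_i(w)$; $i_k$ uniform on $\{1..\widehat n\}$ independent; $z^{k+1}_{i_k}=\tilde z^k_{i_k}$, others unchanged; $u^{k+1}=v^k+\widehat n\theta_k(z^{k+1}-z^k)$; $y_i^k=-2\widehat n\theta_kL_i(\tilde z_i^k-z_i^k)-\nabla_id(v^k)$ ($i\le n$); $\xi_K=\{i_0,\dots,i_K\}$. *)

theory Defs
  imports "HOL-Analysis.Analysis"
begin

(* Primal variable x lives in an arbitrary Euclidean space 'a (t = DIM('a)).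
   Indices are 0-based:  columns A_j (j < n), rows B_j (j < p), constraints g_i (i < m).
   Dual vectors u :: nat => real; only coordinates < nh = n+p+m matter:
   coordinates j < n  <-> u_{1:n},  n <= j < n+p <-> u_{n+1:n+p},  n+p <= j < nh <-> the g-multipliers. *)
record 'a dprob =
  pn :: nat
  pp :: nat
  pm :: nat
  pA :: "nat \<Rightarrow> 'a"
  pB :: "nat \<Rightarrow> 'a"
  pb :: "nat \<Rightarrow> real"
  pf :: "'a \<Rightarrow> real"
  pphi :: "nat \<Rightarrow> real \<Rightarrow> real"
  pg :: "nat \<Rightarrow> 'a \<Rightarrow> real"
  pmu :: real
  pLg :: "nat \<Rightarrow> real"

definition strongly_convex :: "real \<Rightarrow> ('a::real_normed_vector \<Rightarrow> real) \<Rightarrow> bool" where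
  "strongly_convex \<mu> f \<longleftrightarrow> (\<forall>x y. \<forall>s\<in>{0..1}.
     f (s *\<^sub>R x + (1 - s) *\<^sub>R y) \<le> s * f x + (1 - s) * f y - \<mu> / 2 * s * (1 - s) * (norm (x - y))\<^sup>2)"

definition is_subgradient :: "('a::real_inner \<Rightarrow> real) \<Rightarrow> 'a \<Rightarrow> 'a \<Rightarrow> bool" where
  "is_subgradient g x s \<longleftrightarrow> (\<forall>y. g y \<ge> g x + s \<bullet> (y - x))"

definition nh :: "('a, 'b) dprob_scheme \<Rightarrow> nat" where
  "nh P = pn P + pp P + pm P"

definition primal_obj :: "('a::real_inner) dprob \<Rightarrow> 'a \<Rightarrow> real" where
  "primal_obj P x = pf P x + (1 / real (pn P)) * (\<Sum>i<pn P. pphi P i (pA P i \<bullet> x))"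

definition feasible :: "('a::real_inner) dprob \<Rightarrow> 'a \<Rightarrow> bool" where
  "feasible P x \<longleftrightarrow> (\<forall>j<pp P. pB P j \<bullet> x + pb P j = 0) \<and> (\<forall>i<pm P. pg P i x \<le> 0)"

definition assumption1 :: "('a::euclidean_space) dprob \<Rightarrow> bool" where
  "assumption1 P \<longleftrightarrow>
     pn P \<ge> 1 \<and>
     pmu P > 0 \<and> strongly_convex (pmu P) (pf P) \<and>
     (\<exists>M. \<forall>i<pn P. convex_on UNIV (pphi P i) \<and> M-lipschitz_on UNIV (pphi P i)) \<and>
     (\<forall>i<pm P. convex_on UNIV (pg P i) \<and>
        (\<forall>x s. is_subgradient (pg P i) x s \<longrightarrow> norm s \<le> pLg P i)) \<and>
     (\<exists>xb. (\<forall>i<pm P. pg P i xb < 0) \<and> (\<forall>j<pp P. pB P j \<bullet> xb + pb P j = 0)) \<and>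
     bdd_below (primal_obj P ` {x. feasible P x})"

definition dualD :: "('a::real_inner) dprob \<Rightarrow> (nat \<Rightarrow> real) set" where
  "dualD P = {u. \<forall>i. pn P + pp P \<le> i \<and> i < nh P \<longrightarrow> u i \<ge> 0}"

definition Lag :: "('a::real_inner) dprob \<Rightarrow> 'a \<Rightarrow> (nat \<Rightarrow> real) \<Rightarrow> real" where
  "Lag P x u = pf P x
     + (\<Sum>j<pn P. u j * ((pA P j \<bullet> x) / real (pn P)))
     + (\<Sum>j<pp P. u (pn P + j) * (pB P j \<bullet> x + pb P j))
     + (\<Sum>i<pm P. u (pn P + pp P + i) * pg P i x)"

definition xstar :: "('a::real_inner) dprob \<Rightarrow> (nat \<Rightarrow> real) \<Rightarrow> 'a" where
  "xstar P u = (SOME x. \<forall>y. Lag P x u \<le> Lag P y u)"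

definition dfun :: "('a::real_inner) dprob \<Rightarrow> (nat \<Rightarrow> real) \<Rightarrow> real" where
  "dfun P u = - Lag P (xstar P u) u"

(* partial derivative \<nabla>_i d(u); for multiplier coordinates it is taken within [0,\<infinity>) (the domain \<bbbD>) *)
definition gradd :: "('a::real_inner) dprob \<Rightarrow> (nat \<Rightarrow> real) \<Rightarrow> nat \<Rightarrow> real" where
  "gradd P u i = (THE c. ((\<lambda>s. dfun P (u(i := s))) has_real_derivative c)
       (at (u i) within (if i < pn P + pp P then UNIV else {0..})))"

definition conj :: "(real \<Rightarrow> real) \<Rightarrow> real \<Rightarrow> ereal" where
  "conj \<phi> s = (SUP z. ereal (s * z - \<phi> z))"

definition hfun :: "('a::real_inner) dprob \<Rightarrow> nat \<Rightarrow> real \<Rightarrow> ereal" where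
  "hfun P i w = (if i < pn P then ereal (1 / real (pn P)) * conj (pphi P i) w
                 else if i < pn P + pp P then 0
                 else if w \<ge> 0 then 0 else \<infinity>)"

definition Dfun :: "('a::real_inner) dprob \<Rightarrow> (nat \<Rightarrow> real) \<Rightarrow> ereal" where
  "Dfun P u = ereal (dfun P u) + (\<Sum>i<nh P. hfun P i (u i))"

definition Lc :: "('a::real_inner) dprob \<Rightarrow> nat \<Rightarrow> real" where
  "Lc P j = (if j < pn P then (norm (pA P j))\<^sup>2 / ((real (pn P))\<^sup>2 * pmu P)
             else if j < pn P + pp P then (norm (pB P (j - pn P)))\<^sup>2 / pmu P
             else (pLg P (j - pn P - pp P))\<^sup>2 / pmu P)"

definition normL :: "('a::real_inner) dprob \<Rightarrow> (nat \<Rightarrow> real) \<Rightarrow> real" where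
  "normL P w = sqrt (\<Sum>i<nh P. Lc P i * (w i)\<^sup>2)"

definition normL_dual :: "('a::real_inner) dprob \<Rightarrow> (nat \<Rightarrow> real) \<Rightarrow> real" where
  "normL_dual P w = sqrt (\<Sum>i<nh P. (w i)\<^sup>2 / Lc P i)"

fun theta :: "nat \<Rightarrow> nat \<Rightarrow> real" where
  "theta N 0 = 1 / real N"
| "theta N (Suc k) = (sqrt ((theta N k)^4 + 4 * (theta N k)\<^sup>2) - (theta N k)\<^sup>2) / 2"

(* 1/theta_{K0-1}^2 with the convention 1/theta_{-1}^2 = N^2 - N *)
definition inv_theta_sq_prev :: "nat \<Rightarrow> nat \<Rightarrow> real" where
  "inv_theta_sq_prev N K0 = (if K0 = 0 then (real N)\<^sup>2 - real N else 1 / (theta N (K0 - 1))\<^sup>2)"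

definition ztilde :: "('a::real_inner) dprob \<Rightarrow> real \<Rightarrow> (nat \<Rightarrow> real) \<Rightarrow> (nat \<Rightarrow> real) \<Rightarrow> nat \<Rightarrow> real" where
  "ztilde P \<theta> z v i = (SOME w. \<forall>w'.
      ereal (real (nh P) * \<theta> * Lc P i * (w - z i)\<^sup>2 + gradd P v i * (w - z i)) + hfun P i w
    \<le> ereal (real (nh P) * \<theta> * Lc P i * (w' - z i)\<^sup>2 + gradd P v i * (w' - z i)) + hfun P i w')"

definition vpt :: "real \<Rightarrow> (nat \<Rightarrow> real) \<Rightarrow> (nat \<Rightarrow> real) \<Rightarrow> (nat \<Rightarrow> real)" where
  "vpt \<theta> z u = (\<lambda>j. \<theta> * z j + (1 - \<theta>) * u j)"

(* ARDCA run along a fixed realisation I of the index sequence (i_0, i_1, ...), I k < nh.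
   Returns (z^k, u^k). *)
fun ardca :: "('a::real_inner) dprob \<Rightarrow> (nat \<Rightarrow> real) \<Rightarrow> (nat \<Rightarrow> nat) \<Rightarrow> nat
               \<Rightarrow> (nat \<Rightarrow> real) \<times> (nat \<Rightarrow> real)" where
  "ardca P u0 I 0 = (u0, u0)"
| "ardca P u0 I (Suc k) =
     (let (z, u) = ardca P u0 I k;
          \<theta> = theta (nh P) k;
          v = vpt \<theta> z u;
          z' = z (I k := ztilde P \<theta> z v (I k))
      in (z', (\<lambda>j. v j + real (nh P) * \<theta> * (z' j - z j))))"

definition zk :: "('a::real_inner) dprob \<Rightarrow> (nat \<Rightarrow> real) \<Rightarrow> (nat \<Rightarrow> nat) \<Rightarrow> nat \<Rightarrow> nat \<Rightarrow> real" where
  "zk P u0 I k = fst (ardca P u0 I k)"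

definition vk :: "('a::real_inner) dprob \<Rightarrow> (nat \<Rightarrow> real) \<Rightarrow> (nat \<Rightarrow> nat) \<Rightarrow> nat \<Rightarrow> nat \<Rightarrow> real" where
  "vk P u0 I k = vpt (theta (nh P) k) (fst (ardca P u0 I k)) (snd (ardca P u0 I k))"

definition yk :: "('a::real_inner) dprob \<Rightarrow> (nat \<Rightarrow> real) \<Rightarrow> (nat \<Rightarrow> nat) \<Rightarrow> nat \<Rightarrow> nat \<Rightarrow> real" where
  "yk P u0 I k i =
     (let \<theta> = theta (nh P) k; z = zk P u0 I k; v = vk P u0 I k
      in - 2 * real (nh P) * \<theta> * Lc P i * (ztilde P \<theta> z v i - z i) - gradd P v i)"

definition xhat :: "('a::real_inner) dprob \<Rightarrow> (nat \<Rightarrow> real) \<Rightarrow> (nat \<Rightarrow> nat) \<Rightarrow> nat \<Rightarrow> nat \<Rightarrow> 'a" where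
  "xhat P u0 I K0 K =
     (1 / (\<Sum>k=K0..K. 1 / theta (nh P) k)) *\<^sub>R
       (\<Sum>k=K0..K. (1 / theta (nh P) k) *\<^sub>R xstar P (vk P u0 I k))"

definition yhat :: "('a::real_inner) dprob \<Rightarrow> (nat \<Rightarrow> real) \<Rightarrow> (nat \<Rightarrow> nat) \<Rightarrow> nat \<Rightarrow> nat \<Rightarrow> nat \<Rightarrow> real" where
  "yhat P u0 I K0 K i =
     (\<Sum>k=K0..K. real (pn P) * yk P u0 I k i / theta (nh P) k) / (\<Sum>k=K0..K. 1 / theta (nh P) k)"

definition infeas :: "('a::real_inner) dprob \<Rightarrow> 'a \<Rightarrow> (nat \<Rightarrow> real) \<Rightarrow> nat \<Rightarrow> real" where
  "infeas P x y i = (if i < pn P then (pA P i \<bullet> x - y i) / real (pn P)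
                     else if i < pn P + pp P then pB P (i - pn P) \<bullet> x + pb P (i - pn P)
                     else max 0 (pg P (i - pn P - pp P) x))"

(* expectation over \<xi>_K = (i_0,...,i_K), i.i.d. uniform on {0..<N} *)
definition expect_xi :: "nat \<Rightarrow> nat \<Rightarrow> ((nat \<Rightarrow> nat) \<Rightarrow> real) \<Rightarrow> real" where
  "expect_xi N K X = (\<Sum>I\<in>PiE {..K} (\<lambda>_. {..<N}). X I) / (real N) ^ (K + 1)"

end

theory Submission
  imports Defs
begin


lemma limit_ineq_aux:
  fixes A B :: real
  assumes B0: "B \<ge> 0" and H: "\<And>t. 0 < t \<Longrightarrow> t \<le> 1 \<Longrightarrow> A \<ge> (1 - t) * B"
  shows "A \<ge> B"
proof (rule ccontr)
  assume "\<not> A \<ge> B"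
  hence AB: "A < B" by simp
  have A0: "A \<ge> 0" using H[of 1] by simp
  hence Bp: "B > 0" using AB by simp
  define t where "t = (B - A) / (2*B)"
  have t0: "t > 0" using AB Bp by (simp add: t_def)
  have t1: "t \<le> 1" using A0 Bp AB by (simp add: t_def field_simps)
  have "(1 - t) * B = (A + B) / 2" using Bp by (simp add: t_def field_simps)
  with H[OF t0 t1] AB show False by simp
qed

lemma sc_ineq:
  assumes "strongly_convex \<mu> F" "0 \<le> s" "s \<le> 1"
  shows "F (s *\<^sub>R x + (1 - s) *\<^sub>R y) \<le> s * F x + (1 - s) * F y - \<mu> / 2 * s * (1 - s) * (norm (x - y))\<^sup>2"
  using assms unfolding strongly_convex_def by auto

lemma sc_convex:
  assumes "strongly_convex \<mu> F" "\<mu> \<ge> 0"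
  shows "convex_on UNIV F"
proof (rule convex_onI)
  fix t :: real and x y :: 'a assume t: "0 < t" "t < 1"
  have "F (t *\<^sub>R y + (1 - t) *\<^sub>R x) \<le> t * F y + (1 - t) * F x - \<mu> / 2 * t * (1 - t) * (norm (y - x))\<^sup>2"
    using sc_ineq[OF assms(1), of t y x] t by simp
  moreover have "\<mu> / 2 * t * (1 - t) * (norm (y - x))\<^sup>2 \<ge> 0" using t assms(2) by simp
  ultimately show "F ((1 - t) *\<^sub>R x + t *\<^sub>R y) \<le> (1 - t) * F x + t * F y"
    by (simp add: add.commute)
qed simp

lemma sc_add_convex:
  assumes "strongly_convex \<mu> F" "convex_on UNIV G"
  shows "strongly_convex \<mu> (\<lambda>x. F x + G x)"
  unfolding strongly_convex_def
proof (intro allI ballI)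
  fix x y :: 'a and s :: real assume s: "s \<in> {0..1}"
  have "G (s *\<^sub>R x + (1 - s) *\<^sub>R y) \<le> s * G x + (1 - s) * G y"
    using convex_onD[OF assms(2), of "1 - s" x y] s by simp
  with sc_ineq[OF assms(1), of s x y] s show
    "F (s *\<^sub>R x + (1 - s) *\<^sub>R y) + G (s *\<^sub>R x + (1 - s) *\<^sub>R y)
      \<le> s * (F x + G x) + (1 - s) * (F y + G y) - \<mu> / 2 * s * (1 - s) * (norm (x - y))\<^sup>2"
    by (simp add: algebra_simps)
qed

lemma sc_growth:
  assumes sc: "strongly_convex \<mu> F" and min: "\<forall>y. F x \<le> F y"
  shows "F y \<ge> F x + \<mu> / 2 * (norm (y - x))\<^sup>2"
proof -
  consider "\<mu> / 2 * (norm (y - x))\<^sup>2 < 0" | "\<mu> / 2 * (norm (y - x))\<^sup>2 \<ge> 0" by linarith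
  then show ?thesis
  proof cases
    case 1 then show ?thesis using min[rule_format, of y] by linarith
  next
    case 2
    have "F y - F x \<ge> \<mu> / 2 * (norm (y - x))\<^sup>2"
    proof (rule limit_ineq_aux[OF 2])
      fix t :: real assume t: "0 < t" "t \<le> 1"
      have "F x \<le> F (t *\<^sub>R y + (1 - t) *\<^sub>R x)" using min by simp
      also have "\<dots> \<le> t * F y + (1 - t) * F x - \<mu> / 2 * t * (1 - t) * (norm (y - x))\<^sup>2"
        using sc_ineq[OF sc, of t y x] t by simp
      finally have "t * (F y - F x) \<ge> t * ((1 - t) * (\<mu> / 2 * (norm (y - x))\<^sup>2))"
        by (simp add: algebra_simps)
      thus "F y - F x \<ge> (1 - t) * (\<mu> / 2 * (norm (y - x))\<^sup>2)" using t by simp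
    qed
    thus ?thesis by simp
  qed
qed

lemma sc_min_exists:
  fixes F :: "'a::euclidean_space \<Rightarrow> real"
  assumes sc: "strongly_convex \<mu> F" and mu: "\<mu> > 0"
  shows "\<exists>x. \<forall>y. F x \<le> F y"
proof -
  have cont: "continuous_on UNIV F"
    using convex_on_continuous[OF open_UNIV sc_convex[OF sc]] mu by simp
  have "\<exists>x\<in>cball (0::'a) 1. \<forall>y\<in>cball 0 1. F x \<le> F y"
    by (rule continuous_attains_inf) (auto intro: continuous_on_subset[OF cont])
  then obtain x1 where x1: "x1 \<in> cball 0 1" "\<forall>y\<in>cball 0 1. F x1 \<le> F y" by blast
  define m where "m = F x1"
  have m0: "m \<le> F 0" using x1 by (simp add: m_def)
  define R where "R = 1 + 2 * (F 0 - m) / \<mu>"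
  have R1: "R \<ge> 1" using m0 mu by (simp add: R_def)
  have "\<exists>x\<in>cball (0::'a) R. \<forall>y\<in>cball 0 R. F x \<le> F y"
    by (rule continuous_attains_inf) (use R1 in \<open>auto intro: continuous_on_subset[OF cont]\<close>)
  then obtain x0 where x0: "x0 \<in> cball 0 R" "\<forall>y\<in>cball 0 R. F x0 \<le> F y" by blast
  have far: "F y \<ge> F 0" if y: "norm y > R" for y
  proof -
    define r where "r = norm y"
    have r1: "r > 1" "r > 0" using y R1 by (auto simp: r_def)
    define s where "s = 1 / r"
    have s: "0 \<le> s" "s \<le> 1" using r1 by (auto simp: s_def)
    have ys: "norm (s *\<^sub>R y) = 1" using r1 by (simp add: s_def r_def)
    have "m \<le> F (s *\<^sub>R y)" using x1 ys by (simp add: m_def)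
    also have "F (s *\<^sub>R y) = F (s *\<^sub>R y + (1 - s) *\<^sub>R 0)" by simp
    also have "\<dots> \<le> s * F y + (1 - s) * F 0 - \<mu> / 2 * s * (1 - s) * (norm (y - 0))\<^sup>2"
      using sc_ineq[OF sc s] by blast
    finally have "m \<le> s * F y + (1 - s) * F 0 - \<mu> / 2 * s * (1 - s) * r\<^sup>2" by (simp add: r_def)
    hence "r * m \<le> r * (s * F y + (1 - s) * F 0 - \<mu> / 2 * s * (1 - s) * r\<^sup>2)"
      using r1 by simp
    also have "\<dots> = F y + (r - 1) * F 0 - \<mu> / 2 * (r - 1) * r"
      using r1 by (simp add: s_def field_simps power2_eq_square)
    finally have A0: "r * m \<le> F y + (r - 1) * F 0 - \<mu> / 2 * (r - 1) * r" .
    have A: "F y - F 0 \<ge> \<mu> / 2 * (r - 1) * r - (F 0 - m) * r"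
      using A0 by (simp add: algebra_simps)
    have "r - 1 \<ge> 2 * (F 0 - m) / \<mu>" using y by (simp add: r_def R_def)
    hence "\<mu> * (r - 1) \<ge> 2 * (F 0 - m)" using mu by (simp add: field_simps)
    hence "\<mu> / 2 * (r - 1) \<ge> F 0 - m" by simp
    hence "\<mu> / 2 * (r - 1) * r \<ge> (F 0 - m) * r" using r1 by (simp add: mult_right_mono)
    with A show ?thesis by linarith
  qed
  have "\<forall>y. F x0 \<le> F y"
  proof
    fix y
    show "F x0 \<le> F y"
    proof (cases "norm y \<le> R")
      case True thus ?thesis using x0 by simp
    next
      case False
      hence "F 0 \<le> F y" using far by simp
      moreover have "F x0 \<le> F 0" using x0 R1 by simp
      ultimately show ?thesis by simp
    qed
  qed
  thus ?thesis by blast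
qed


lemma subgrad_exists:
  fixes g :: "'a::euclidean_space \<Rightarrow> real"
  assumes cv: "convex_on UNIV g"
  shows "\<exists>s. is_subgradient g x s"
proof -
  define S where "S = {(x, g x)}"
  define T where "T = {(y, r::real). r > g y}"
  have cS: "convex S" by (simp add: S_def)
  have cT: "convex T"
    unfolding convex_def
  proof (intro ballI allI impI)
    fix p q :: "'a \<times> real" and u v :: real
    assume p: "p \<in> T" and q: "q \<in> T" and uv: "0 \<le> u" "0 \<le> v" "u + v = 1"
    obtain y1 r1 where p': "p = (y1, r1)" by (cases p)
    obtain y2 r2 where q': "q = (y2, r2)" by (cases q)
    have r1: "r1 > g y1" using p by (simp add: T_def p')
    have r2: "r2 > g y2" using q by (simp add: T_def q')
    have "g (u *\<^sub>R y1 + v *\<^sub>R y2) \<le> u * g y1 + v * g y2"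
      using cv uv unfolding convex_on_def by blast
    also have "\<dots> < u * r1 + v * r2"
    proof (cases "u > 0")
      case True
      hence "u * g y1 < u * r1" using r1 by simp
      moreover have "v * g y2 \<le> v * r2" using r2 uv by (simp add: mult_left_mono)
      ultimately show ?thesis by simp
    next
      case False
      hence "u = 0" using uv by simp
      hence "v = 1" using uv by simp
      with \<open>u = 0\<close> show ?thesis using r2 by simp
    qed
    finally show "u *\<^sub>R p + v *\<^sub>R q \<in> T" by (simp add: T_def p' q')
  qed
  have ST: "S \<inter> T = {}" by (auto simp: S_def T_def)
  have "(x, g x + 1) \<in> T" by (simp add: T_def)
  hence Tne: "T \<noteq> {}" by blast
  obtain a b where a: "a \<noteq> 0" and aS: "\<forall>p\<in>S. inner a p \<le> b" and aT: "\<forall>p\<in>T. inner a p \<ge> b"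
    using separating_hyperplane_sets[OF cS cT _ Tne ST] by (auto simp: S_def)
  obtain a1 a2 where a': "a = (a1, a2)" by (cases a)
  have ax: "inner a1 x + a2 * g x \<le> b" using aS by (simp add: S_def a')
  have aT': "inner a1 y + a2 * r \<ge> b" if "r > g y" for y r
    using aT that by (auto simp: T_def a')
  have "inner a1 x + a2 * (g x + 1) \<ge> b" using aT'[of x "g x + 1"] by simp
  have a2nn: "a2 \<ge> 0"
  proof (rule ccontr)
    assume "\<not> a2 \<ge> 0"
    hence "a2 < 0" by simp
    define r where "r = g x + 1 + (\<bar>b\<bar> + \<bar>inner a1 x\<bar> + 1) / (- a2)"
    have "r > g x" using \<open>a2 < 0\<close> by (simp add: r_def divide_pos_pos add_pos_nonneg)
    hence "inner a1 x + a2 * r \<ge> b" using aT' by blast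
    moreover have "a2 * r = a2 * (g x + 1) - (\<bar>b\<bar> + \<bar>inner a1 x\<bar> + 1)"
      using \<open>a2 < 0\<close> by (simp add: r_def field_simps)
    ultimately have "inner a1 x + a2 * (g x + 1) - (\<bar>b\<bar> + \<bar>inner a1 x\<bar> + 1) \<ge> b" by simp
    moreover have "a2 * (g x + 1) \<le> a2 * g x" using \<open>a2 < 0\<close> by simp
    ultimately show False using ax by linarith
  qed
  have a2p: "a2 > 0"
  proof (rule ccontr)
    assume "\<not> a2 > 0"
    hence a20: "a2 = 0" using a2nn by simp
    hence a10: "a1 \<noteq> 0" using a a' by (auto simp: zero_prod_def)
    have "inner a1 (x - a1) + a2 * (g (x - a1) + 1) \<ge> b" using aT'[of "x - a1" "g (x - a1) + 1"] by simp
    hence "inner a1 x - inner a1 a1 \<ge> b" using a20 by (simp add: inner_diff_right)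
    with ax a20 have "inner a1 a1 \<le> 0" by simp
    thus False using a10 inner_gt_zero_iff[of a1] by linarith
  qed
  define s where "s = (- 1 / a2) *\<^sub>R a1"
  have "g y \<ge> g x + inner s (y - x)" for y
  proof -
    have "g y - g x - inner s (y - x) \<ge> 0"
    proof (rule ccontr)
      assume na: "\<not> ?thesis"
      define e where "e = g x + inner s (y - x) - g y"
      have e: "e > 0" using na by (simp add: e_def)
      have "inner a1 y + a2 * (g y + e / 2) \<ge> b" using aT'[of y "g y + e/2"] e by simp
      hence "inner a1 y + a2 * (g y + e / 2) \<ge> inner a1 x + a2 * g x" using ax by simp
      hence "a2 * (g y + e / 2 - g x) \<ge> - inner a1 (y - x)" by (simp add: algebra_simps inner_diff_right)
      hence "g y + e / 2 - g x \<ge> - inner a1 (y - x) / a2" using a2p by (simp add: field_simps)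
      moreover have "inner s (y - x) = - inner a1 (y - x) / a2" by (simp add: s_def)
      ultimately have "inner s (y - x) \<le> g y + e / 2 - g x" by simp
      hence "2 * inner s (y - x) \<le> 2 * g y + e - 2 * g x" by simp
      thus False using e unfolding e_def by linarith
    qed
    thus ?thesis by simp
  qed
  thus ?thesis unfolding is_subgradient_def by blast
qed

lemma subgrad_lip:
  fixes g :: "'a::euclidean_space \<Rightarrow> real"
  assumes cv: "convex_on UNIV g" and bnd: "\<forall>x s. is_subgradient g x s \<longrightarrow> norm s \<le> L"
  shows "\<bar>g x - g y\<bar> \<le> L * norm (x - y)" "L \<ge> 0"
proof -
  have one: "g a - g b \<le> L * norm (a - b)" for a b
  proof -
    obtain s where s: "is_subgradient g a s" using subgrad_exists[OF cv] by blast
    have "g b \<ge> g a + inner s (b - a)" using s by (simp add: is_subgradient_def)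
    moreover have "inner s (b - a) \<ge> - (norm s * norm (b - a))"
      using Cauchy_Schwarz_ineq2[of s "b - a"] by linarith
    moreover have "norm s * norm (b - a) \<le> L * norm (b - a)"
      using bnd s by (simp add: mult_right_mono)
    ultimately show ?thesis by (simp add: norm_minus_commute)
  qed
  show "\<bar>g x - g y\<bar> \<le> L * norm (x - y)"
    using one[of x y] one[of y x] by (simp add: norm_minus_commute abs_le_iff)
  obtain s where "is_subgradient g x s" using subgrad_exists[OF cv] by blast
  thus "L \<ge> 0" using bnd by (meson norm_ge_zero order_trans)
qed


lemma sum_split_add: "(\<Sum>j<a+b. F j) = (\<Sum>j<a. F j) + (\<Sum>j<b. F (a+j))"
  for F :: "nat \<Rightarrow> 'b::comm_monoid_add"
  by (induction b) (simp_all add: add.assoc)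

lemma sum_upd: "i < N \<Longrightarrow> (\<Sum>j<N. (u(i:=a)) j * F j) = (\<Sum>j<N. u j * F j) + (a - u i) * F i"
  for F :: "nat \<Rightarrow> real"
proof -
  assume i: "i < N"
  have "(\<Sum>j<N. (u(i:=a)) j * F j) = (\<Sum>j<N. u j * F j + (if j = i then (a - u i) * F j else 0))"
    by (rule sum.cong) (auto simp: algebra_simps)
  also have "\<dots> = (\<Sum>j<N. u j * F j) + (a - u i) * F i"
    using i by (simp add: sum.distrib)
  finally show ?thesis .
qed

lemma sum_upd_diff: "i < N \<Longrightarrow> (\<Sum>j<N. ((u(i:=a)) j - u j) * F j) = (a - u i) * F i"
  for F :: "nat \<Rightarrow> real"
proof -
  assume i: "i < N"
  have "(\<Sum>j<N. ((u(i:=a)) j - u j) * F j) = (\<Sum>j<N. (if j = i then (a - u i) * F j else 0))"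
    by (rule sum.cong) auto
  also have "\<dots> = (a - u i) * F i" using i by simp
  finally show ?thesis .
qed

definition cf :: "('a::real_inner) dprob \<Rightarrow> nat \<Rightarrow> 'a \<Rightarrow> real" where
  "cf P j x = (if j < pn P then (pA P j \<bullet> x) / real (pn P)
     else if j < pn P + pp P then pB P (j - pn P) \<bullet> x + pb P (j - pn P)
     else pg P (j - pn P - pp P) x)"

definition ell :: "('a::real_inner) dprob \<Rightarrow> nat \<Rightarrow> real" where
  "ell P j = (if j < pn P then norm (pA P j) / real (pn P)
     else if j < pn P + pp P then norm (pB P (j - pn P))
     else pLg P (j - pn P - pp P))"

definition Gd :: "('a::real_inner) dprob \<Rightarrow> (nat \<Rightarrow> real) \<Rightarrow> nat \<Rightarrow> real" where
  "Gd P u j = - cf P j (xstar P u)"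

lemma Lag_cf: "Lag P x u = pf P x + (\<Sum>j<nh P. u j * cf P j x)"
proof -
  have s1: "(\<Sum>j<nh P. u j * cf P j x) = (\<Sum>j<pn P + pp P. u j * cf P j x)
      + (\<Sum>i<pm P. u (pn P + pp P + i) * cf P (pn P + pp P + i) x)"
    unfolding nh_def by (rule sum_split_add)
  have s2: "(\<Sum>j<pn P + pp P. u j * cf P j x) = (\<Sum>j<pn P. u j * cf P j x)
      + (\<Sum>j<pp P. u (pn P + j) * cf P (pn P + j) x)"
    by (rule sum_split_add)
  have e1: "(\<Sum>j<pn P. u j * cf P j x) = (\<Sum>j<pn P. u j * ((pA P j \<bullet> x) / real (pn P)))"
    by (rule sum.cong) (auto simp: cf_def)
  have e2: "(\<Sum>j<pp P. u (pn P + j) * cf P (pn P + j) x) = (\<Sum>j<pp P. u (pn P + j) * (pB P j \<bullet> x + pb P j))"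
    by (rule sum.cong) (auto simp: cf_def)
  have e3: "(\<Sum>i<pm P. u (pn P + pp P + i) * cf P (pn P + pp P + i) x) = (\<Sum>i<pm P. u (pn P + pp P + i) * pg P i x)"
    by (rule sum.cong) (auto simp: cf_def)
  show ?thesis unfolding Lag_def s1 s2 e1 e2 e3 by (simp add: add.assoc)
qed

lemma Lag_upd: "i < nh P \<Longrightarrow> Lag P x (u(i := a)) = Lag P x u + (a - u i) * cf P i x"
  unfolding Lag_cf using sum_upd[of i "nh P" u a "\<lambda>j. cf P j x"] by simp

lemma Lag_diff: "Lag P x u' = Lag P x u + (\<Sum>j<nh P. (u' j - u j) * cf P j x)"
  unfolding Lag_cf by (simp add: algebra_simps sum_subtractf)

lemma dualD_iff: "u \<in> dualD P \<longleftrightarrow> (\<forall>i. pn P + pp P \<le> i \<and> i < nh P \<longrightarrow> u i \<ge> 0)"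
  by (simp add: dualD_def)

lemma A1_facts:
  assumes "assumption1 P"
  shows "pn P \<ge> 1" "pmu P > 0" "strongly_convex (pmu P) (pf P)"
    "\<And>i. i < pm P \<Longrightarrow> convex_on UNIV (pg P i)"
    "\<And>i. i < pm P \<Longrightarrow> (\<forall>x s. is_subgradient (pg P i) x s \<longrightarrow> norm s \<le> pLg P i)"
  using assms unfolding assumption1_def by auto

lemma nh_ge1: "assumption1 P \<Longrightarrow> nh P \<ge> 1"
  using A1_facts(1)[of P] by (simp add: nh_def)

locale actx =
  fixes P :: "('a::euclidean_space) dprob"
  assumes A1: "assumption1 P"
begin

lemma cf_lip: "j < nh P \<Longrightarrow> \<bar>cf P j x - cf P j y\<bar> \<le> ell P j * norm (x - y)"
proof -
  assume j: "j < nh P"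
  consider (a) "j < pn P" | (b) "\<not> j < pn P" "j < pn P + pp P" | (c) "\<not> j < pn P + pp P" by linarith
  then show ?thesis
  proof cases
    case a
    have "\<bar>cf P j x - cf P j y\<bar> = \<bar>pA P j \<bullet> (x - y)\<bar> / real (pn P)"
      using a by (simp add: cf_def inner_diff_right diff_divide_distrib[symmetric])
    also have "\<dots> \<le> norm (pA P j) * norm (x - y) / real (pn P)"
      by (simp add: Cauchy_Schwarz_ineq2 divide_right_mono)
    finally show ?thesis using a by (simp add: ell_def)
  next
    case b
    have "\<bar>cf P j x - cf P j y\<bar> = \<bar>pB P (j - pn P) \<bullet> (x - y)\<bar>"
      using b by (simp add: cf_def inner_diff_right)
    also have "\<dots> \<le> norm (pB P (j - pn P)) * norm (x - y)"
      by (simp add: Cauchy_Schwarz_ineq2)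
    finally show ?thesis using b by (simp add: ell_def)
  next
    case c
    define i where "i = j - pn P - pp P"
    have i: "i < pm P" using c j by (simp add: i_def nh_def)
    have "\<bar>pg P i x - pg P i y\<bar> \<le> pLg P i * norm (x - y)"
      using subgrad_lip(1)[OF A1_facts(4)[OF A1 i] A1_facts(5)[OF A1 i]] .
    thus ?thesis using c by (simp add: ell_def cf_def i_def)
  qed
qed

lemma ell_nonneg: "j < nh P \<Longrightarrow> ell P j \<ge> 0"
proof -
  assume j: "j < nh P"
  show ?thesis
  proof (cases "j < pn P + pp P")
    case True thus ?thesis by (simp add: ell_def)
  next
    case False
    define i where "i = j - pn P - pp P"
    have i: "i < pm P" using False j by (simp add: i_def nh_def)
    show ?thesis using subgrad_lip(2)[OF A1_facts(4)[OF A1 i] A1_facts(5)[OF A1 i]] False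
      by (simp add: ell_def i_def)
  qed
qed

lemma Lc_ell: "Lc P j = (ell P j)\<^sup>2 / pmu P"
  by (simp add: Lc_def ell_def power_divide)

lemma cf_term_convex:
  assumes u: "u \<in> dualD P" and j: "j < nh P" and t: "0 \<le> t" "t \<le> 1"
  shows "u j * cf P j ((1 - t) *\<^sub>R x + t *\<^sub>R y) \<le> (1 - t) * (u j * cf P j x) + t * (u j * cf P j y)"
proof -
  consider (a) "j < pn P" | (b) "\<not> j < pn P" "j < pn P + pp P" | (c) "\<not> j < pn P + pp P" by linarith
  then show ?thesis
  proof cases
    case a
    have "cf P j ((1 - t) *\<^sub>R x + t *\<^sub>R y) = (1 - t) * cf P j x + t * cf P j y"
      using a by (simp add: cf_def inner_add_right add_divide_distrib)
    show ?thesis unfolding \<open>cf P j ((1 - t) *\<^sub>R x + t *\<^sub>R y) = (1 - t) * cf P j x + t * cf P j y\<close>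
      by (simp add: algebra_simps)
  next
    case b
    have "cf P j ((1 - t) *\<^sub>R x + t *\<^sub>R y) = (1 - t) * cf P j x + t * cf P j y"
      using b by (simp add: cf_def inner_add_right algebra_simps)
    show ?thesis unfolding \<open>cf P j ((1 - t) *\<^sub>R x + t *\<^sub>R y) = (1 - t) * cf P j x + t * cf P j y\<close>
      by (simp add: algebra_simps)
  next
    case c
    define i where "i = j - pn P - pp P"
    have i: "i < pm P" using c j by (simp add: i_def nh_def)
    have uj: "u j \<ge> 0" using u c j by (simp add: dualD_iff)
    have "cf P j ((1 - t) *\<^sub>R x + t *\<^sub>R y) \<le> (1 - t) * cf P j x + t * cf P j y"
      using convex_onD[OF A1_facts(4)[OF A1 i], of t x y] t c by (simp add: cf_def i_def)
    hence "u j * cf P j ((1 - t) *\<^sub>R x + t *\<^sub>R y) \<le> u j * ((1 - t) * cf P j x + t * cf P j y)"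
      using uj by (simp add: mult_left_mono)
    thus ?thesis by (simp add: algebra_simps)
  qed
qed

lemma Lag_sc: "u \<in> dualD P \<Longrightarrow> strongly_convex (pmu P) (\<lambda>x. Lag P x u)"
proof -
  assume u: "u \<in> dualD P"
  have cv: "convex_on UNIV (\<lambda>x. \<Sum>j<nh P. u j * cf P j x)"
  proof (rule convex_onI)
    fix t :: real and x y :: 'a assume t: "0 < t" "t < 1"
    have "(\<Sum>j<nh P. u j * cf P j ((1 - t) *\<^sub>R x + t *\<^sub>R y))
        \<le> (\<Sum>j<nh P. (1 - t) * (u j * cf P j x) + t * (u j * cf P j y))"
      by (rule sum_mono) (use cf_term_convex[OF u] t in auto)
    thus "(\<Sum>j<nh P. u j * cf P j ((1 - t) *\<^sub>R x + t *\<^sub>R y))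
        \<le> (1 - t) * (\<Sum>j<nh P. u j * cf P j x) + t * (\<Sum>j<nh P. u j * cf P j y)"
      by (simp add: sum.distrib sum_distrib_left)
  qed simp
  show ?thesis unfolding Lag_cf by (rule sc_add_convex[OF A1_facts(3)[OF A1] cv])
qed

lemma xstar_min: "u \<in> dualD P \<Longrightarrow> Lag P (xstar P u) u \<le> Lag P y u"
proof -
  assume u: "u \<in> dualD P"
  have "\<exists>x. \<forall>y. Lag P x u \<le> Lag P y u"
    using sc_min_exists[OF Lag_sc[OF u] A1_facts(2)[OF A1]] .
  hence "\<forall>y. Lag P (xstar P u) u \<le> Lag P y u"
    unfolding xstar_def by (rule someI_ex)
  thus ?thesis by blast
qed

lemma xstar_growth: "u \<in> dualD P \<Longrightarrow>
    Lag P y u \<ge> Lag P (xstar P u) u + pmu P / 2 * (norm (y - xstar P u))\<^sup>2"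
  using sc_growth[OF Lag_sc, of u "xstar P u" y] xstar_min by blast

lemma dual_lower:
  assumes u: "u \<in> dualD P" and u': "u' \<in> dualD P"
  shows "dfun P u' \<ge> dfun P u + (\<Sum>j<nh P. (u' j - u j) * Gd P u j)"
proof -
  have "Lag P (xstar P u') u' \<le> Lag P (xstar P u) u'" using xstar_min[OF u'] .
  also have "\<dots> = Lag P (xstar P u) u + (\<Sum>j<nh P. (u' j - u j) * cf P j (xstar P u))"
    by (rule Lag_diff)
  finally have le: "Lag P (xstar P u') u' \<le> Lag P (xstar P u) u + (\<Sum>j<nh P. (u' j - u j) * cf P j (xstar P u))" .
  have "(\<Sum>j<nh P. (u' j - u j) * Gd P u j) = - (\<Sum>j<nh P. (u' j - u j) * cf P j (xstar P u))"
    by (simp add: Gd_def sum_negf[symmetric])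
  with le show ?thesis by (simp add: dfun_def)
qed

lemma amgm_aux: "(\<mu>::real) > 0 \<Longrightarrow> a * D - \<mu> / 2 * D\<^sup>2 \<le> a\<^sup>2 / (2 * \<mu>)"
proof -
  assume mu: "\<mu> > 0"
  have "(\<mu> * D - a)\<^sup>2 / (2 * \<mu>) \<ge> 0" using mu by simp
  moreover have "(\<mu> * D - a)\<^sup>2 / (2 * \<mu>) = \<mu> / 2 * D\<^sup>2 - a * D + a\<^sup>2 / (2 * \<mu>)"
    using mu by (simp add: field_simps power2_eq_square)
  ultimately show ?thesis by linarith
qed

lemma dual_upper:
  assumes u: "u \<in> dualD P" and u': "u(i := u i + s) \<in> dualD P" and i: "i < nh P"
  shows "dfun P (u(i := u i + s)) \<le> dfun P u + s * Gd P u i + Lc P i * s\<^sup>2 / 2"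
proof -
  define u' where "u' = u(i := u i + s)"
  define x where "x = xstar P u"
  define x' where "x' = xstar P u'"
  define D where "D = norm (x' - x)"
  have mu: "pmu P > 0" using A1_facts(2)[OF A1] .
  have e1: "dfun P u' = - Lag P x' u - s * cf P i x'"
    unfolding dfun_def u'_def x'_def using Lag_upd[OF i] by (simp add: u'_def)
  have e2: "Lag P x' u \<ge> Lag P x u + pmu P / 2 * D\<^sup>2"
    using xstar_growth[OF u, of x'] by (simp add: x_def D_def)
  have e3: "- s * cf P i x' = s * Gd P u i - s * (cf P i x' - cf P i x)"
    by (simp add: Gd_def x_def algebra_simps)
  have e4: "- s * (cf P i x' - cf P i x) \<le> \<bar>s\<bar> * ell P i * D"
  proof -
    have "- s * (cf P i x' - cf P i x) \<le> \<bar>s\<bar> * \<bar>cf P i x' - cf P i x\<bar>"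
      by (metis abs_ge_minus_self abs_mult mult_minus_left)
    also have "\<dots> \<le> \<bar>s\<bar> * (ell P i * D)"
      using cf_lip[OF i, of x' x] by (simp add: D_def mult_left_mono)
    finally show ?thesis by simp
  qed
  have "\<bar>s\<bar> * ell P i * D - pmu P / 2 * D\<^sup>2 \<le> (\<bar>s\<bar> * ell P i)\<^sup>2 / (2 * pmu P)"
    using amgm_aux[OF mu] .
  also have "(\<bar>s\<bar> * ell P i)\<^sup>2 / (2 * pmu P) = Lc P i * s\<^sup>2 / 2"
    by (simp add: Lc_ell power_mult_distrib mult.commute)
  finally have e5: "\<bar>s\<bar> * ell P i * D - pmu P / 2 * D\<^sup>2 \<le> Lc P i * s\<^sup>2 / 2" .
  have "dfun P u' \<le> dfun P u + s * Gd P u i + Lc P i * s\<^sup>2 / 2"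
    using e1 e2 e3 e4 e5 unfolding dfun_def x_def[symmetric] by linarith
  thus ?thesis by (simp add: u'_def)
qed

end


context actx begin

lemma Lc_nonneg: "Lc P i \<ge> 0"
  using A1_facts(2)[OF A1] by (simp add: Lc_ell)

lemma gradd_eq:
  assumes u: "u \<in> dualD P" and i: "i < nh P"
  shows "gradd P u i = Gd P u i"
proof -
  define S where "S = (if i < pn P + pp P then UNIV else {0..} :: real set)"
  define \<phi> where "\<phi> = (\<lambda>s. dfun P (u(i := s)))"
  define x where "x = u i"
  define G where "G = Gd P u i"
  define L where "L = Lc P i"
  have L0: "L \<ge> 0" using Lc_nonneg by (simp add: L_def)
  have xS: "x \<in> S" using u i by (auto simp: S_def x_def dualD_iff)
  have inD: "u(i := y) \<in> dualD P" if "y \<in> S" for y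
    using u that i by (auto simp: S_def dualD_iff split: if_splits)
  have phx: "\<phi> x = dfun P u" by (simp add: \<phi>_def x_def)
  have bnd: "\<bar>\<phi> y - \<phi> x - (y - x) * G\<bar> \<le> L * (y - x)\<^sup>2 / 2" if y: "y \<in> S" for y
  proof -
    have lo: "\<phi> y \<ge> \<phi> x + (y - x) * G"
      using dual_lower[OF u inD[OF y]] sum_upd_diff[OF i, of u y "Gd P u"]
      by (simp add: phx \<phi>_def x_def G_def)
    have "u(i := u i + (y - u i)) = u(i := y)" by simp
    hence hi: "\<phi> y \<le> \<phi> x + (y - x) * G + L * (y - x)\<^sup>2 / 2"
      using dual_upper[OF u _ i, of "y - u i"] inD[OF y]
      by (simp add: phx \<phi>_def x_def G_def L_def mult.commute)
    have "L * (y - x)\<^sup>2 / 2 \<ge> 0" using L0 by simp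
    with lo hi show ?thesis by (simp add: abs_le_iff)
  qed
  have qb: "\<bar>(\<phi> y - \<phi> x) / (y - x) - G\<bar> \<le> L * \<bar>y - x\<bar> / 2" if y: "y \<in> S" "y \<noteq> x" for y
  proof -
    have nz: "y - x \<noteq> 0" using y by simp
    have "(\<phi> y - \<phi> x) / (y - x) - G = (\<phi> y - \<phi> x - (y - x) * G) / (y - x)"
      using nz by (simp add: field_simps)
    hence "\<bar>(\<phi> y - \<phi> x) / (y - x) - G\<bar> = \<bar>\<phi> y - \<phi> x - (y - x) * G\<bar> / \<bar>y - x\<bar>"
      by (simp add: abs_divide)
    also have "\<dots> \<le> (L * (y - x)\<^sup>2 / 2) / \<bar>y - x\<bar>"
      by (rule divide_right_mono[OF bnd[OF y(1)]]) simp
    also have "\<dots> = L * \<bar>y - x\<bar> / 2"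
    proof -
      define d where "d = \<bar>y - x\<bar>"
      have e: "L * (y - x)\<^sup>2 / 2 / \<bar>y - x\<bar> = L * d\<^sup>2 / 2 / d" by (simp add: d_def)
      have "d > 0" using nz by (simp add: d_def)
      hence "L * d\<^sup>2 / 2 / d = L * d / 2" by (simp add: power2_eq_square)
      with e show ?thesis by (simp add: d_def)
    qed
    finally show ?thesis .
  qed
  have qlo: "G - L / 2 * \<bar>y - x\<bar> \<le> (\<phi> y - \<phi> x) / (y - x)"
    and qhi: "(\<phi> y - \<phi> x) / (y - x) \<le> G + L / 2 * \<bar>y - x\<bar>" if "y \<in> S" "y \<noteq> x" for y
  proof -
    have "L * \<bar>y - x\<bar> / 2 = L / 2 * \<bar>y - x\<bar>" by simp
    thus "G - L / 2 * \<bar>y - x\<bar> \<le> (\<phi> y - \<phi> x) / (y - x)"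
      "(\<phi> y - \<phi> x) / (y - x) \<le> G + L / 2 * \<bar>y - x\<bar>"
      using qb[OF that] unfolding abs_le_iff by linarith+
  qed
  define c where "c = L / 2"
  have deriv: "(\<phi> has_real_derivative G) (at x within S)"
    unfolding has_field_derivative_iff
  proof (rule tendsto_sandwich[where f = "\<lambda>y. G - c * \<bar>y - x\<bar>" and h = "\<lambda>y. G + c * \<bar>y - x\<bar>"])
    show "\<forall>\<^sub>F y in at x within S. G - c * \<bar>y - x\<bar> \<le> (\<phi> y - \<phi> x) / (y - x)"
      unfolding eventually_at_filter
      by (rule always_eventually) (use qlo in \<open>auto simp: c_def\<close>)
    show "\<forall>\<^sub>F y in at x within S. (\<phi> y - \<phi> x) / (y - x) \<le> G + c * \<bar>y - x\<bar>"
      unfolding eventually_at_filter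
      by (rule always_eventually) (use qhi in \<open>auto simp: c_def\<close>)
    have "((\<lambda>y. G - c * \<bar>y - x\<bar>) \<longlongrightarrow> G - c * \<bar>x - x\<bar>) (at x within S)"
      by (intro tendsto_intros)
    thus "((\<lambda>y. G - c * \<bar>y - x\<bar>) \<longlongrightarrow> G) (at x within S)" by simp
    have "((\<lambda>y. G + c * \<bar>y - x\<bar>) \<longlongrightarrow> G + c * \<bar>x - x\<bar>) (at x within S)"
      by (intro tendsto_intros)
    thus "((\<lambda>y. G + c * \<bar>y - x\<bar>) \<longlongrightarrow> G) (at x within S)" by simp
  qed
  have sub: "{x<..} \<subseteq> S" using xS by (auto simp: S_def split: if_splits)
  have uniq: "c = G" if c: "(\<phi> has_real_derivative c) (at x within S)" for c
  proof -
    have "(\<phi> has_real_derivative c) (at_right x)"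
      using has_field_derivative_subset[OF c sub] .
    moreover have "(\<phi> has_real_derivative G) (at_right x)"
      using has_field_derivative_subset[OF deriv sub] .
    ultimately show ?thesis
      unfolding has_field_derivative_iff using tendsto_unique[OF trivial_limit_at_right_real] by blast
  qed
  have "gradd P u i = (THE c. (\<phi> has_real_derivative c) (at x within S))"
    unfolding gradd_def \<phi>_def x_def S_def by simp
  also have "\<dots> = G" using deriv uniq by (rule the_equality)
  finally show ?thesis by (simp add: G_def)
qed

end


lemma lsc_min_compact:
  fixes Q :: "real \<Rightarrow> ereal"
  assumes K: "compact K" "K \<noteq> {}"
    and lsc: "\<And>w c. Q w > ereal c \<Longrightarrow> \<exists>e>0. \<forall>y. dist y w < e \<longrightarrow> Q y > ereal c"
  shows "\<exists>w\<in>K. \<forall>y\<in>K. Q w \<le> Q y"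
proof (rule ccontr)
  assume "\<not> ?thesis"
  hence "\<forall>w\<in>K. \<exists>y\<in>K. Q y < Q w" by (auto simp: not_le)
  then obtain yf where yf: "\<And>w. w \<in> K \<Longrightarrow> yf w \<in> K \<and> Q (yf w) < Q w" by metis
  have "\<forall>w\<in>K. \<exists>c. Q (yf w) < ereal c \<and> ereal c < Q w" using yf ereal_dense2 by blast
  then obtain cf where cf: "\<And>w. w \<in> K \<Longrightarrow> Q (yf w) < ereal (cf w) \<and> ereal (cf w) < Q w" by metis
  have "\<forall>w\<in>K. \<exists>e>0. \<forall>y. dist y w < e \<longrightarrow> Q y > ereal (cf w)" using cf lsc by blast
  then obtain ef where ef: "\<And>w. w \<in> K \<Longrightarrow> ef w > 0 \<and> (\<forall>y. dist y w < ef w \<longrightarrow> Q y > ereal (cf w))"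
    by metis
  have cover: "K \<subseteq> (\<Union>w\<in>K. ball w (ef w))"
  proof
    fix x assume "x \<in> K"
    thus "x \<in> (\<Union>w\<in>K. ball w (ef w))" using ef[of x] by force
  qed
  obtain T where T: "T \<subseteq> K" "finite T" "K \<subseteq> (\<Union>w\<in>T. ball w (ef w))"
    using compactE_image[OF K(1), of K "\<lambda>w. ball w (ef w)"] cover by auto
  have Tne: "T \<noteq> {}" using T K(2) by auto
  define cs where "cs = Min (cf ` T)"
  have "cs \<in> cf ` T" unfolding cs_def using T Tne by (intro Min_in) auto
  then obtain w0 where w0: "w0 \<in> T" "cf w0 = cs" by auto
  have "yf w0 \<in> K" using yf T w0 by auto
  then obtain w1 where w1: "w1 \<in> T" "yf w0 \<in> ball w1 (ef w1)" using T by auto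
  have "Q (yf w0) > ereal (cf w1)" using ef[of w1] w1 T by (auto simp: dist_commute)
  moreover have "cf w1 \<ge> cs" unfolding cs_def using T w1 by (intro Min_le) auto
  moreover have "Q (yf w0) < ereal (cf w0)" using cf[of w0] w0 T by auto
  ultimately show False using w0 by (metis ereal_less_eq(3) less_le_trans order_less_asym)
qed

definition hconv :: "(real \<Rightarrow> ereal) \<Rightarrow> bool" where
  "hconv h \<longleftrightarrow> (\<forall>w. h w \<noteq> -\<infinity>) \<and> (\<forall>a b t. h a < \<infinity> \<longrightarrow> h b < \<infinity> \<longrightarrow> 0 \<le> t \<longrightarrow> t \<le> 1 \<longrightarrow>
      h ((1 - t) * a + t * b) < \<infinity> \<and>
      real_of_ereal (h ((1 - t) * a + t * b)) \<le> (1 - t) * real_of_ereal (h a) + t * real_of_ereal (h b))"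

lemma fin_ereal: "X \<noteq> -\<infinity> \<Longrightarrow> X < \<infinity> \<Longrightarrow> X = ereal (real_of_ereal X)"
  by (cases X) auto

lemma three_point:
  fixes h :: "real \<Rightarrow> ereal"
  assumes hc: "hconv h" and c: "c > 0"
    and min: "\<forall>w'. ereal (c * (wt - z0)\<^sup>2 + G * (wt - z0)) + h wt \<le> ereal (c * (w' - z0)\<^sup>2 + G * (w' - z0)) + h w'"
    and fin: "h w0 < \<infinity>"
  shows "h wt < \<infinity>"
    and "h w < \<infinity> \<Longrightarrow> c * (w - z0)\<^sup>2 + G * (w - z0) + real_of_ereal (h w)
          \<ge> c * (wt - z0)\<^sup>2 + G * (wt - z0) + real_of_ereal (h wt) + c * (w - wt)\<^sup>2"
proof -
  define q where "q = (\<lambda>w. c * (w - z0)\<^sup>2 + G * (w - z0))"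
  have nm: "h x \<noteq> -\<infinity>" for x using hc by (simp add: hconv_def)
  have fe: "h x = ereal (real_of_ereal (h x))" if "h x < \<infinity>" for x using fin_ereal[OF nm that] .
  show wtf: "h wt < \<infinity>"
  proof (rule ccontr)
    assume "\<not> h wt < \<infinity>"
    hence "h wt = \<infinity>" by simp
    hence "ereal (q w0) + h w0 = \<infinity>" using min[rule_format, of w0] by (simp add: q_def)
    thus False using fin nm[of w0] by (cases "h w0") auto
  qed
  have rmin: "q wt + real_of_ereal (h wt) \<le> q w + real_of_ereal (h w)" if "h w < \<infinity>" for w
  proof -
    have "ereal (q wt) + h wt \<le> ereal (q w) + h w" using min by (simp add: q_def)
    hence "ereal (q wt) + ereal (real_of_ereal (h wt)) \<le> ereal (q w) + ereal (real_of_ereal (h w))"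
      using fe[OF wtf] fe[OF that] by metis
    thus ?thesis by simp
  qed
  assume hw: "h w < \<infinity>"
  have "q w + real_of_ereal (h w) - (q wt + real_of_ereal (h wt)) \<ge> c * (w - wt)\<^sup>2"
  proof (rule limit_ineq_aux)
    show "c * (w - wt)\<^sup>2 \<ge> 0" using c by simp
    fix t :: real assume t: "0 < t" "t \<le> 1"
    define wx where "wx = (1 - t) * wt + t * w"
    have hx: "h wx < \<infinity>" and hxle: "real_of_ereal (h wx) \<le> (1 - t) * real_of_ereal (h wt) + t * real_of_ereal (h w)"
      using hc wtf hw t unfolding hconv_def wx_def by auto
    have qx: "q wx = (1 - t) * q wt + t * q w - t * (1 - t) * (c * (w - wt)\<^sup>2)"
      by (simp add: q_def wx_def algebra_simps power2_eq_square)
    have "q wt + real_of_ereal (h wt) \<le> q wx + real_of_ereal (h wx)" using rmin[OF hx] .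
    also have "\<dots> \<le> (1 - t) * (q wt + real_of_ereal (h wt)) + t * (q w + real_of_ereal (h w))
        - t * ((1 - t) * (c * (w - wt)\<^sup>2))"
      using qx hxle by (simp add: algebra_simps)
    finally have "t * ((1 - t) * (c * (w - wt)\<^sup>2)) \<le> t * (q w + real_of_ereal (h w) - (q wt + real_of_ereal (h wt)))"
      by (simp add: algebra_simps)
    thus "(1 - t) * (c * (w - wt)\<^sup>2) \<le> q w + real_of_ereal (h w) - (q wt + real_of_ereal (h wt))"
      using t by simp
  qed
  thus "c * (w - z0)\<^sup>2 + G * (w - z0) + real_of_ereal (h w)
          \<ge> c * (wt - z0)\<^sup>2 + G * (wt - z0) + real_of_ereal (h wt) + c * (w - wt)\<^sup>2"
    by (simp add: q_def)
qed

lemma conj_ge: "ereal (s * z - \<phi> z) \<le> conj \<phi> s"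
  unfolding conj_def by (rule SUP_upper) simp

lemma conj_nminf: "conj \<phi> s \<noteq> -\<infinity>"
  using conj_ge[of s 0 \<phi>] by auto

lemma conj_convex:
  assumes a: "conj \<phi> a < \<infinity>" and b: "conj \<phi> b < \<infinity>" and t: "0 \<le> t" "t \<le> 1"
  shows "conj \<phi> ((1 - t) * a + t * b) \<le> ereal ((1 - t) * real_of_ereal (conj \<phi> a) + t * real_of_ereal (conj \<phi> b))"
  unfolding conj_def[of \<phi> "(1 - t) * a + t * b"]
proof (rule SUP_least)
  fix z assume "z \<in> (UNIV :: real set)"
  define A where "A = real_of_ereal (conj \<phi> a)"
  define B where "B = real_of_ereal (conj \<phi> b)"
  have "ereal (a * z - \<phi> z) \<le> ereal A"
    using conj_ge[of a z \<phi>] fin_ereal[OF conj_nminf a] by (simp add: A_def)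
  hence za: "a * z - \<phi> z \<le> A" by simp
  have "ereal (b * z - \<phi> z) \<le> ereal B"
    using conj_ge[of b z \<phi>] fin_ereal[OF conj_nminf b] by (simp add: B_def)
  hence zb: "b * z - \<phi> z \<le> B" by simp
  have "((1 - t) * a + t * b) * z - \<phi> z = (1 - t) * (a * z - \<phi> z) + t * (b * z - \<phi> z)"
    by (simp add: algebra_simps)
  also have "\<dots> \<le> (1 - t) * A + t * B"
    using za zb t by (intro add_mono mult_left_mono) auto
  finally show "ereal (((1 - t) * a + t * b) * z - \<phi> z) \<le> ereal ((1 - t) * real_of_ereal (conj \<phi> a) + t * real_of_ereal (conj \<phi> b))"
    by (simp add: A_def B_def)
qed

lemma conj_outside:
  assumes lip: "M-lipschitz_on UNIV \<phi>" and s: "\<bar>s\<bar> > M"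
  shows "conj \<phi> s = \<infinity>"
  unfolding conj_def
proof (rule SUP_PInfty)
  fix n :: nat
  have M0: "M \<ge> 0" using lip by (simp add: lipschitz_on_def)
  define t where "t = (real n + \<bar>\<phi> 0\<bar> + 1) / (\<bar>s\<bar> - M)"
  have t0: "t \<ge> 0" using s by (simp add: t_def)
  define z where "z = sgn s * t"
  have sz: "s * z = \<bar>s\<bar> * t" by (simp add: z_def abs_sgn mult.assoc[symmetric] sgn_mult_abs)
  have az: "\<bar>z\<bar> \<le> t" using t0 by (simp add: z_def abs_mult abs_sgn_eq)
  have "dist (\<phi> z) (\<phi> 0) \<le> M * dist z 0" using lip unfolding lipschitz_on_def by blast
  hence "\<phi> z \<le> \<phi> 0 + M * \<bar>z\<bar>" by (simp add: dist_real_def)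
  also have "M * \<bar>z\<bar> \<le> M * t" using az M0 by (simp add: mult_left_mono)
  finally have "\<phi> z \<le> \<phi> 0 + M * t" by simp
  hence "s * z - \<phi> z \<ge> (\<bar>s\<bar> - M) * t - \<phi> 0" using sz by (simp add: algebra_simps)
  also have "(\<bar>s\<bar> - M) * t = real n + \<bar>\<phi> 0\<bar> + 1" using s by (simp add: t_def)
  finally have "s * z - \<phi> z \<ge> real n" by simp
  thus "\<exists>i\<in>UNIV. ereal (real n) \<le> ereal (s * i - \<phi> i)" by auto
qed

lemma ereal_mult_gt: "k > 0 \<Longrightarrow> ereal k * X > ereal r \<longleftrightarrow> X > ereal (r / k)"
  by (cases X) (auto simp: field_simps)

lemma ereal_add_gt: "ereal a + Y > ereal r \<longleftrightarrow> Y > ereal (r - a)"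
  by (cases Y) auto

lemma conj_quad_lsc:
  assumes k: "k > 0" and gt: "ereal (c * (w - z0)\<^sup>2 + G * (w - z0)) + ereal k * conj \<phi> w > ereal r"
  shows "\<exists>e>0. \<forall>y. dist y w < e \<longrightarrow> ereal (c * (y - z0)\<^sup>2 + G * (y - z0)) + ereal k * conj \<phi> y > ereal r"
proof -
  define q where "q = (\<lambda>y::real. c * (y - z0)\<^sup>2 + G * (y - z0))"
  have "conj \<phi> w > ereal ((r - q w) / k)"
    using gt unfolding ereal_add_gt ereal_mult_gt[OF k] q_def by simp
  then obtain z where z: "ereal ((r - q w) / k) < ereal (w * z - \<phi> z)"
    unfolding conj_def less_SUP_iff by auto
  define F where "F = (\<lambda>y. y * z - \<phi> z - (r - q y) / k)"
  have Fw: "F w > 0" using z by (simp add: F_def)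
  have "isCont F w" unfolding F_def q_def by (intro continuous_intros) (use k in simp)
  hence "(F \<longlongrightarrow> F w) (at w)" by (simp add: isCont_def)
  hence "eventually (\<lambda>y. F y > 0) (at w)" using Fw by (rule order_tendstoD)
  then obtain e where e: "e > 0" "\<forall>y. y \<noteq> w \<and> dist y w < e \<longrightarrow> F y > 0"
    unfolding eventually_at by blast
  have "F y > 0 \<Longrightarrow> ereal (q y) + ereal k * conj \<phi> y > ereal r" for y
  proof -
    assume "F y > 0"
    hence "ereal ((r - q y) / k) < ereal (y * z - \<phi> z)" by (simp add: F_def)
    also have "\<dots> \<le> conj \<phi> y" by (rule conj_ge)
    finally show ?thesis unfolding ereal_add_gt ereal_mult_gt[OF k] .
  qed
  with e Fw show ?thesis unfolding q_def by (metis dist_eq_0_iff)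
qed


lemma hconv_conj: "k > 0 \<Longrightarrow> hconv (\<lambda>w. ereal k * conj \<phi> w)"
  unfolding hconv_def
proof (intro conjI allI impI)
  assume k: "k > 0"
  fix w show "ereal k * conj \<phi> w \<noteq> -\<infinity>"
    using conj_nminf[of \<phi> w] k by (cases "conj \<phi> w") auto
next
  fix a b t :: real
  assume k: "k > 0" and a: "ereal k * conj \<phi> a < \<infinity>" and b: "ereal k * conj \<phi> b < \<infinity>"
    and t: "0 \<le> t" "t \<le> 1"
  have a': "conj \<phi> a < \<infinity>" using a k by (cases "conj \<phi> a") auto
  have b': "conj \<phi> b < \<infinity>" using b k by (cases "conj \<phi> b") auto
  obtain A where A: "conj \<phi> a = ereal A" using a' conj_nminf[of \<phi> a] by (cases "conj \<phi> a") auto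
  obtain B where B: "conj \<phi> b = ereal B" using b' conj_nminf[of \<phi> b] by (cases "conj \<phi> b") auto
  have c: "conj \<phi> ((1 - t) * a + t * b) \<le> ereal ((1 - t) * A + t * B)"
    using conj_convex[OF a' b' t] A B by simp
  then obtain C where C: "conj \<phi> ((1 - t) * a + t * b) = ereal C" "C \<le> (1 - t) * A + t * B"
    using conj_nminf[of \<phi> "(1 - t) * a + t * b"] by (cases "conj \<phi> ((1 - t) * a + t * b)") auto
  show "ereal k * conj \<phi> ((1 - t) * a + t * b) < \<infinity>" using C by simp
  have "k * C \<le> k * ((1 - t) * A + t * B)" using C k by (simp add: mult_left_mono)
  thus "real_of_ereal (ereal k * conj \<phi> ((1 - t) * a + t * b))
      \<le> (1 - t) * real_of_ereal (ereal k * conj \<phi> a) + t * real_of_ereal (ereal k * conj \<phi> b)"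
    using A B C by (simp add: algebra_simps)
qed

lemma hconv_zero: "hconv (\<lambda>w. 0)"
  unfolding hconv_def by simp

lemma hconv_ind: "hconv (\<lambda>w. if w \<ge> 0 then 0 else \<infinity>)"
  unfolding hconv_def
proof (intro conjI allI impI)
  fix a b t :: real
  assume a: "(if a \<ge> 0 then 0 else \<infinity>) < (\<infinity>::ereal)" and b: "(if b \<ge> 0 then 0 else \<infinity>) < (\<infinity>::ereal)"
    and t: "0 \<le> t" "t \<le> 1"
  have "a \<ge> 0" "b \<ge> 0" using a b by (auto split: if_splits)
  hence "(1 - t) * a + t * b \<ge> 0" using t by simp
  thus "(if (1 - t) * a + t * b \<ge> 0 then 0 else \<infinity>) < (\<infinity>::ereal)"
    "real_of_ereal (if (1 - t) * a + t * b \<ge> 0 then 0 else \<infinity>)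
      \<le> (1 - t) * real_of_ereal (if a \<ge> 0 then 0 else \<infinity>) + t * real_of_ereal (if b \<ge> 0 then 0 else (\<infinity>::ereal))"
    using \<open>a \<ge> 0\<close> \<open>b \<ge> 0\<close> by auto
qed simp

lemma quad_complete:
  fixes c :: real
  assumes c: "c > 0"
  shows "c * (y - z0)\<^sup>2 + G * (y - z0) = c * (y - (z0 - G / (2 * c)))\<^sup>2 - G\<^sup>2 / (4 * c)"
  using c by (simp add: field_simps power2_eq_square)

lemma min_conj_exists:
  assumes k: "k > 0" and lip: "M-lipschitz_on UNIV \<phi>"
  shows "\<exists>w. \<forall>w'. ereal (c * (w - z0)\<^sup>2 + G * (w - z0)) + ereal k * conj \<phi> w
      \<le> ereal (c * (w' - z0)\<^sup>2 + G * (w' - z0)) + ereal k * conj \<phi> w'"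
proof -
  define Q where "Q = (\<lambda>w. ereal (c * (w - z0)\<^sup>2 + G * (w - z0)) + ereal k * conj \<phi> w)"
  have M0: "M \<ge> 0" using lip by (simp add: lipschitz_on_def)
  have "\<exists>w\<in>{-M..M}. \<forall>y\<in>{-M..M}. Q w \<le> Q y"
  proof (rule lsc_min_compact)
    show "compact {-M..M}" by simp
    show "{-M..M} \<noteq> {}" using M0 by simp
    fix w r assume "ereal r < Q w"
    thus "\<exists>e>0. \<forall>y. dist y w < e \<longrightarrow> ereal r < Q y"
      unfolding Q_def by (rule conj_quad_lsc[OF k])
  qed
  then obtain w where w: "w \<in> {-M..M}" "\<forall>y\<in>{-M..M}. Q w \<le> Q y" by blast
  have "Q w \<le> Q y" for y
  proof (cases "y \<in> {-M..M}")
    case True thus ?thesis using w by blast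
  next
    case False
    hence "\<bar>y\<bar> > M" by auto
    hence "conj \<phi> y = \<infinity>" by (rule conj_outside[OF lip])
    hence "Q y = \<infinity>" using k by (simp add: Q_def)
    thus ?thesis by simp
  qed
  thus ?thesis unfolding Q_def by blast
qed

context actx begin

lemma hfun_cases:
  "hfun P j = (if j < pn P then (\<lambda>w. ereal (1 / real (pn P)) * conj (pphi P j) w)
     else if j < pn P + pp P then (\<lambda>w. 0) else (\<lambda>w. if w \<ge> 0 then 0 else \<infinity>))"
  by (auto simp: hfun_def fun_eq_iff)

lemma n_pos: "real (pn P) > 0"
  using A1_facts(1)[OF A1] by simp

lemma hconv_hfun: "hconv (hfun P j)"
  unfolding hfun_cases using hconv_conj[of "1 / real (pn P)"] n_pos hconv_zero hconv_ind by auto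

lemma hfun_nminf: "hfun P j w \<noteq> -\<infinity>"
  using hconv_hfun unfolding hconv_def by blast

lemma hfun_B: "pn P \<le> j \<Longrightarrow> j < pn P + pp P \<Longrightarrow> hfun P j w = 0"
  by (simp add: hfun_def)

lemma hfun_G: "pn P + pp P \<le> j \<Longrightarrow> hfun P j w < \<infinity> \<longleftrightarrow> w \<ge> 0"
  by (simp add: hfun_def)

lemma phi_lip: "\<exists>M. \<forall>i<pn P. M-lipschitz_on UNIV (pphi P i)"
  using A1 unfolding assumption1_def by blast

lemma hmin_exists:
  assumes c: "c > 0"
  shows "\<exists>w. \<forall>w'. ereal (c * (w - z0)\<^sup>2 + G * (w - z0)) + hfun P j w
      \<le> ereal (c * (w' - z0)\<^sup>2 + G * (w' - z0)) + hfun P j w'"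
proof -
  define wu where "wu = z0 - G / (2 * c)"
  have qc: "c * (y - z0)\<^sup>2 + G * (y - z0) = c * (y - wu)\<^sup>2 - G\<^sup>2 / (4 * c)" for y
    unfolding wu_def by (rule quad_complete[OF c])
  consider (a) "j < pn P" | (b) "\<not> j < pn P" "j < pn P + pp P" | (c') "\<not> j < pn P + pp P" by linarith
  then show ?thesis
  proof cases
    case a
    obtain M where M: "\<forall>i<pn P. M-lipschitz_on UNIV (pphi P i)" using phi_lip by blast
    show ?thesis using min_conj_exists[of "1 / real (pn P)" M "pphi P j" c z0 G] M a n_pos
      unfolding hfun_cases by simp
  next
    case b
    have "c * (wu - z0)\<^sup>2 + G * (wu - z0) \<le> c * (w' - z0)\<^sup>2 + G * (w' - z0)" for w'
      unfolding qc using c by simp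
    thus ?thesis using b unfolding hfun_cases by (intro exI[of _ wu]) simp
  next
    case c'
    define w where "w = max 0 wu"
    have "c * (w - z0)\<^sup>2 + G * (w - z0) \<le> c * (w' - z0)\<^sup>2 + G * (w' - z0)" if w': "w' \<ge> 0" for w'
    proof (cases "wu \<ge> 0")
      case True thus ?thesis unfolding qc w_def using c by simp
    next
      case False
      have "(0 - wu)\<^sup>2 \<le> (w' - wu)\<^sup>2" using False w' by (intro power_mono) auto
      hence "c * (0 - wu)\<^sup>2 \<le> c * (w' - wu)\<^sup>2" using c by simp
      thus ?thesis unfolding qc w_def using False by simp
    qed
    moreover have "w \<ge> 0" by (simp add: w_def)
    ultimately show ?thesis using c' unfolding hfun_cases by (intro exI[of _ w]) auto
  qed
qed

lemma ztilde_min: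
  assumes c: "real (nh P) * \<theta> * Lc P i > 0"
  shows "\<forall>w'. ereal (real (nh P) * \<theta> * Lc P i * (ztilde P \<theta> z v i - z i)\<^sup>2 + gradd P v i * (ztilde P \<theta> z v i - z i))
      + hfun P i (ztilde P \<theta> z v i)
    \<le> ereal (real (nh P) * \<theta> * Lc P i * (w' - z i)\<^sup>2 + gradd P v i * (w' - z i)) + hfun P i w'"
  unfolding ztilde_def
  by (rule someI_ex) (rule hmin_exists[OF c])

end


lemma theta_step:
  fixes t :: real
  assumes t: "t > 0"
  defines "t' \<equiv> (sqrt (t ^ 4 + 4 * t\<^sup>2) - t\<^sup>2) / 2"
  shows "t'\<^sup>2 = (1 - t') * t\<^sup>2" "t' > 0" "t' < 1" "t' \<le> t"
proof -
  define u where "u = t\<^sup>2"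
  have u0: "u > 0" using t by (simp add: u_def)
  have t4: "t ^ 4 = u\<^sup>2" by (simp add: u_def power_mult[symmetric])
  define s where "s = sqrt (u\<^sup>2 + 4 * u)"
  have nn: "u\<^sup>2 + 4 * u \<ge> 0" using u0 by (intro add_nonneg_nonneg) auto
  hence s2: "s * s = u * u + 4 * u" unfolding s_def
    by (metis power2_eq_square real_sqrt_pow2)
  have s0: "s \<ge> 0" unfolding s_def using nn by simp
  have td: "t' = (s - u) / 2" unfolding t'_def s_def u_def by (simp add: power_mult[symmetric])
  have "t'\<^sup>2 = (s * s - 2 * s * u + u * u) / 4" unfolding td power2_eq_square by (simp add: algebra_simps)
  also have "\<dots> = (2 * u * u + 4 * u - 2 * s * u) / 4" unfolding s2 by simp
  also have "\<dots> = (1 - t') * u" unfolding td by (simp add: field_simps)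
  finally show e: "t'\<^sup>2 = (1 - t') * t\<^sup>2" by (simp add: u_def)
  have "u * u < s * s" using s2 u0 by simp
  hence "u < s" using s0 u0 by (metis mult_mono not_less less_imp_le)
  thus tp: "t' > 0" unfolding td by simp
  have "t'\<^sup>2 > 0" using tp by simp
  hence "(1 - t') * t\<^sup>2 > 0" by (simp only: e)
  moreover have "t\<^sup>2 > 0" using t by simp
  ultimately have "1 - t' > 0" by (metis zero_less_mult_pos2)
  thus "t' < 1" by simp
  have "(1 - t') * t\<^sup>2 \<le> 1 * t\<^sup>2" using tp by (intro mult_right_mono) auto
  hence "t'\<^sup>2 \<le> t\<^sup>2" by (simp only: e mult_1)
  thus "t' \<le> t" by (rule power2_le_imp_le) (use t in simp)
qed

context
  fixes N :: nat
  assumes N1: "N \<ge> 1"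
begin

lemma theta_props: "theta N k > 0 \<and> theta N k \<le> 1 / real N"
proof (induction k)
  case 0 thus ?case using N1 by simp
next
  case (Suc k)
  thus ?case using theta_step[of "theta N k"] by simp
qed

lemma theta_pos: "theta N k > 0" using theta_props by blast
lemma theta_le: "theta N k \<le> 1 / real N" using theta_props by blast
lemma theta_le1: "theta N k \<le> 1"
proof -
  have "1 / real N \<le> 1" using N1 by simp
  thus ?thesis using theta_le[of k] by linarith
qed
lemma Ntheta_le1: "real N * theta N k \<le> 1"
  using theta_le[of k] N1 by (simp add: field_simps)

lemma theta_Suc_sq: "(theta N (Suc k))\<^sup>2 = (1 - theta N (Suc k)) * (theta N k)\<^sup>2"
  using theta_step(1)[OF theta_pos[of k]] by simp

lemma theta_Suc_le: "theta N (Suc k) \<le> theta N k"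
  using theta_step(4)[OF theta_pos[of k]] by simp

lemma ib_eq: "inv_theta_sq_prev N k = (1 - theta N k) / (theta N k)\<^sup>2"
proof (cases k)
  case 0 thus ?thesis using N1 by (simp add: inv_theta_sq_prev_def field_simps power2_eq_square)
next
  case (Suc k')
  have t: "theta N k > 0" "theta N k' > 0" using theta_pos by auto
  have "(theta N k)\<^sup>2 = (1 - theta N k) * (theta N k')\<^sup>2" using theta_Suc_sq[of k'] Suc by simp
  thus ?thesis using Suc t by (simp add: inv_theta_sq_prev_def field_simps)
qed

lemma ib_Suc: "inv_theta_sq_prev N (Suc k) = 1 / (theta N k)\<^sup>2"
  by (simp add: inv_theta_sq_prev_def)

lemma ib_nonneg: "inv_theta_sq_prev N k \<ge> 0"
  using ib_eq[of k] theta_le1[of k] by simp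

lemma inv_theta_eq: "1 / theta N k = 1 / (theta N k)\<^sup>2 - inv_theta_sq_prev N k"
  using theta_pos[of k] unfolding ib_eq by (simp add: field_simps power2_eq_square)

lemma sum_inv_theta:
  "K0 \<le> K \<Longrightarrow> (\<Sum>k=K0..K. 1 / theta N k) = 1 / (theta N K)\<^sup>2 - inv_theta_sq_prev N K0"
proof (induction K rule: dec_induct)
  case base thus ?case using inv_theta_eq by simp
next
  case (step K)
  have "(\<Sum>k=K0..Suc K. 1 / theta N k) = (\<Sum>k=K0..K. 1 / theta N k) + 1 / theta N (Suc K)"
    using step by simp
  also have "\<dots> = 1 / (theta N (Suc K))\<^sup>2 - inv_theta_sq_prev N K0"
    using step inv_theta_eq[of "Suc K"] ib_Suc[of K] by simp
  finally show ?case .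
qed

lemma sum_inv_theta_pos: "K0 \<le> K \<Longrightarrow> (\<Sum>k=K0..K. 1 / theta N k) > 0"
proof -
  assume "K0 \<le> K"
  hence "(\<Sum>k=K0..K. 1 / theta N k) \<ge> 1 / theta N K" 
    by (intro member_le_sum) (auto simp: theta_pos less_imp_le)
  moreover have "1 / theta N K > 0" using theta_pos by simp
  ultimately show ?thesis by linarith
qed

fun ak :: "nat \<Rightarrow> real" where
  "ak 0 = 1" | "ak (Suc k) = real N * theta N k"

lemma ak_range: "0 \<le> ak k \<and> ak k \<le> 1"
  by (cases k) (auto simp: Ntheta_le1 theta_pos less_imp_le)

lemma c0_nonneg: "(1 - theta N k) * ak k + theta N k - real N * theta N k \<ge> 0"
proof (cases k)
  case 0 thus ?thesis using N1 by simp
next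
  case (Suc k')
  define t where "t = theta N k"
  define t' where "t' = theta N k'"
  have t: "t > 0" "t' > 0" "t \<le> 1 / real N" using theta_pos theta_le by (auto simp: t_def t'_def)
  have sq: "t\<^sup>2 = (1 - t) * t'\<^sup>2" using theta_Suc_sq[of k'] Suc by (simp add: t_def t'_def)
  have r1: "1 - 1 / real N \<ge> 0" "1 - 1 / real N \<le> 1" using N1 by (auto simp: field_simps)
  have "(1 - 1 / real N) * (1 - 1 / real N) \<le> (1 - 1 / real N) * 1" using r1 by (intro mult_left_mono) auto
  hence "(1 - 1 / real N)\<^sup>2 \<le> 1 - 1 / real N" by (simp add: power2_eq_square)
  also have "\<dots> \<le> 1 - t" using t by simp
  also have "1 - t = (t / t')\<^sup>2" using sq t by (simp add: field_simps power2_eq_square)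
  finally have "1 - 1 / real N \<le> t / t'" by (rule power2_le_imp_le) (use t in simp)
  hence "real N * (1 - 1 / real N) \<le> real N * (t / t')" by (rule mult_left_mono) simp
  moreover have "real N * (1 - 1 / real N) = real N - 1" using N1 by (simp add: right_diff_distrib)
  ultimately have A: "real N - 1 \<le> real N * t / t'" by simp
  have h: "(1 - t) * t' = t\<^sup>2 / t'" using sq t by (simp add: field_simps power2_eq_square)
  have "(1 - t) * (real N * t') = real N * ((1 - t) * t')" by (simp add: algebra_simps)
  also have "\<dots> = real N * (t\<^sup>2 / t')" using h by simp
  finally have h2: "(1 - t) * (real N * t') = real N * (t\<^sup>2 / t')" .
  have "(1 - t) * (real N * t') + t - real N * t = real N * (t\<^sup>2 / t') + t - real N * t"
    using h2 by simp
  also have "\<dots> = t * (real N * t / t' + 1 - real N)"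
    by (simp add: power2_eq_square algebra_simps)
  also have "\<dots> \<ge> 0" using A t by simp
  finally show ?thesis using Suc by (simp add: t_def t'_def)
qed

end


definition uk :: "('a::real_inner) dprob \<Rightarrow> (nat \<Rightarrow> real) \<Rightarrow> (nat \<Rightarrow> nat) \<Rightarrow> nat \<Rightarrow> nat \<Rightarrow> real" where
  "uk P u0 I k = snd (ardca P u0 I k)"

definition Hr :: "('a::real_inner) dprob \<Rightarrow> nat \<Rightarrow> real \<Rightarrow> real" where
  "Hr P j w = real_of_ereal (hfun P j w)"

fun hh :: "('a::real_inner) dprob \<Rightarrow> (nat \<Rightarrow> real) \<Rightarrow> (nat \<Rightarrow> nat) \<Rightarrow> nat \<Rightarrow> nat \<Rightarrow> real" where
  "hh P u0 I 0 j = Hr P j (u0 j)"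
| "hh P u0 I (Suc k) j = (1 - theta (nh P) k) * hh P u0 I k j + theta (nh P) k * Hr P j (zk P u0 I k j)
     + real (nh P) * theta (nh P) k * (Hr P j (zk P u0 I (Suc k) j) - Hr P j (zk P u0 I k j))"

lemma zk_0: "zk P u0 I 0 = u0" by (simp add: zk_def)
lemma uk_0: "uk P u0 I 0 = u0" by (simp add: uk_def)

lemma ardca_Suc_split:
  "zk P u0 I (Suc k) = (zk P u0 I k)(I k := ztilde P (theta (nh P) k) (zk P u0 I k) (vk P u0 I k) (I k))
   \<and> uk P u0 I (Suc k) = (\<lambda>j. vk P u0 I k j + real (nh P) * theta (nh P) k * (zk P u0 I (Suc k) j - zk P u0 I k j))"
  by (simp add: zk_def uk_def vk_def Let_def split: prod.split)

lemma zk_Suc: "zk P u0 I (Suc k) = (zk P u0 I k)(I k := ztilde P (theta (nh P) k) (zk P u0 I k) (vk P u0 I k) (I k))"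
  using ardca_Suc_split by blast

lemma uk_Suc: "uk P u0 I (Suc k) j = vk P u0 I k j + real (nh P) * theta (nh P) k * (zk P u0 I (Suc k) j - zk P u0 I k j)"
  using ardca_Suc_split by metis

lemma vk_eq: "vk P u0 I k j = theta (nh P) k * zk P u0 I k j + (1 - theta (nh P) k) * uk P u0 I k j"
  by (simp add: vk_def vpt_def zk_def uk_def)

lemma inv_step_gen:
  fixes h :: "real \<Rightarrow> ereal"
  assumes hc: "hconv h" and hz: "h z < \<infinity>" and hw: "h w < \<infinity>" and hz': "h z' < \<infinity>"
    and a: "0 \<le> a" "a \<le> 1" and th: "0 < \<theta>" "\<theta> \<le> 1"
    and c0: "(1 - \<theta>) * a + \<theta> - Nt \<ge> 0" and Nt: "Nt \<le> 1" "0 \<le> Nt"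
    and H: "a * real_of_ereal (h z) + (1 - a) * real_of_ereal (h w) \<le> hv"
  shows "\<exists>w'. h w' < \<infinity> \<and> \<theta> * z + (1 - \<theta>) * (a * z + (1 - a) * w) + Nt * (z' - z) = Nt * z' + (1 - Nt) * w'
     \<and> Nt * real_of_ereal (h z') + (1 - Nt) * real_of_ereal (h w')
        \<le> (1 - \<theta>) * hv + \<theta> * real_of_ereal (h z) + Nt * (real_of_ereal (h z') - real_of_ereal (h z))"
proof -
  define R where "R = (\<lambda>x. real_of_ereal (h x))"
  define c where "c = (1 - \<theta>) * a + \<theta> - Nt"
  define b where "b = (1 - \<theta>) * (1 - a)"
  have b0: "b \<ge> 0" using a th by (simp add: b_def)
  have sum: "c + b = 1 - Nt" by (simp add: c_def b_def algebra_simps)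
  have ueq: "\<theta> * z + (1 - \<theta>) * (a * z + (1 - a) * w) + Nt * (z' - z) = Nt * z' + c * z + b * w"
    by (simp add: c_def b_def algebra_simps)
  have H': "(1 - \<theta>) * (a * R z + (1 - a) * R w) \<le> (1 - \<theta>) * hv"
    using H th by (intro mult_left_mono) (auto simp: R_def)
  have key: "Nt * R z' + c * R z + b * R w \<le> (1 - \<theta>) * hv + \<theta> * R z + Nt * (R z' - R z)"
    using H' by (simp add: c_def b_def algebra_simps)
  show ?thesis
  proof (cases "1 - Nt = 0")
    case True
    hence cb: "c = 0" "b = 0" using sum c0 b0 unfolding c_def by linarith+
    show ?thesis
      using hz' ueq key True cb unfolding R_def by (intro exI[of _ z']) simp
  next
    case False
    hence s: "1 - Nt > 0" using Nt by simp
    define t where "t = b / (1 - Nt)"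
    have t: "0 \<le> t" "t \<le> 1" using b0 s sum c0 by (auto simp: t_def c_def field_simps)
    have 1: "1 - t = c / (1 - Nt)" using s sum by (simp add: t_def field_simps)
    define w' where "w' = (1 - t) * z + t * w"
    have hw': "h w' < \<infinity>" and Rw': "R w' \<le> (1 - t) * R z + t * R w"
      using hc hz hw t unfolding hconv_def w'_def R_def by blast+
    have m1: "(1 - Nt) * (c / (1 - Nt)) = c" "(1 - Nt) * (b / (1 - Nt)) = b" using s by simp_all
    have "(1 - Nt) * w' = (1 - Nt) * (c / (1 - Nt)) * z + (1 - Nt) * (b / (1 - Nt)) * w"
      unfolding w'_def 1 by (simp add: t_def algebra_simps)
    hence weq: "(1 - Nt) * w' = c * z + b * w" unfolding m1 .
    have "(1 - Nt) * R w' \<le> (1 - Nt) * ((1 - t) * R z + t * R w)"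
      using Rw' s by (intro mult_left_mono) auto
    also have "\<dots> = (1 - Nt) * (c / (1 - Nt)) * R z + (1 - Nt) * (b / (1 - Nt)) * R w"
      unfolding 1 by (simp add: t_def algebra_simps)
    also have "\<dots> = c * R z + b * R w" unfolding m1 ..
    finally have "Nt * R z' + (1 - Nt) * R w' \<le> Nt * R z' + c * R z + b * R w" by simp
    with key have "Nt * R z' + (1 - Nt) * R w' \<le> (1 - \<theta>) * hv + \<theta> * R z + Nt * (R z' - R z)" by linarith
    thus ?thesis using hw' ueq weq unfolding R_def by (intro exI[of _ w']) simp
  qed
qed

locale actx2 = actx +
  fixes u0 :: "nat \<Rightarrow> real"
  assumes u0fin: "\<forall>j<nh P. hfun P j (u0 j) < \<infinity>"
    and Lpos: "\<forall>j<nh P. Lc P j > 0"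
begin

abbreviation "N \<equiv> nh P"
abbreviation "th k \<equiv> theta (nh P) k"

lemma N1: "N \<ge> 1" using nh_ge1[OF A1] .

lemma ak_Suc: "ak N (Suc k) = real N * th k" using N1 by simp
lemma ak_0: "ak N 0 = 1" using N1 by simp

lemma thp: "th k > 0" using theta_pos[OF N1] .
lemma th1: "th k \<le> 1" using theta_le1[OF N1] .
lemma Nth1: "real N * th k \<le> 1" using Ntheta_le1[OF N1] .

lemma ztilde_fin:
  assumes j: "j < N" and zf: "hfun P j (z j) < \<infinity>" and t: "\<theta> > 0"
  shows "hfun P j (ztilde P \<theta> z v j) < \<infinity>"
proof -
  have c: "real N * \<theta> * Lc P j > 0" using Lpos j t N1 by simp
  show ?thesis using three_point(1)[OF hconv_hfun c ztilde_min[OF c] zf] .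
qed

lemma invariant:
  "\<forall>j<N. hfun P j (zk P u0 I k j) < \<infinity> \<and>
     (\<exists>w. hfun P j w < \<infinity> \<and> uk P u0 I k j = ak N k * zk P u0 I k j + (1 - ak N k) * w
        \<and> ak N k * Hr P j (zk P u0 I k j) + (1 - ak N k) * Hr P j w \<le> hh P u0 I k j)"
proof (induction k)
  case 0
  show ?case using u0fin by (auto simp: zk_0 uk_0 Hr_def ak_0)
next
  case (Suc k)
  show ?case
  proof (intro allI impI)
    fix j assume j: "j < N"
    define z where "z = zk P u0 I k j"
    define z' where "z' = zk P u0 I (Suc k) j"
    obtain w where w: "hfun P j w < \<infinity>" "uk P u0 I k j = ak N k * z + (1 - ak N k) * w"
      "ak N k * Hr P j z + (1 - ak N k) * Hr P j w \<le> hh P u0 I k j"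
      using Suc.IH j unfolding z_def by blast
    have hz: "hfun P j z < \<infinity>" using Suc.IH j by (simp add: z_def)
    have hz': "hfun P j z' < \<infinity>"
    proof (cases "j = I k")
      case True
      have "z' = ztilde P (th k) (zk P u0 I k) (vk P u0 I k) j"
        using True by (simp add: z'_def zk_Suc)
      thus ?thesis using ztilde_fin[OF j _ thp] Suc.IH j by simp
    next
      case False
      thus ?thesis using hz by (simp add: z'_def z_def zk_Suc)
    qed
    obtain w' where w': "hfun P j w' < \<infinity>"
      "th k * z + (1 - th k) * (ak N k * z + (1 - ak N k) * w) + real N * th k * (z' - z)
         = real N * th k * z' + (1 - real N * th k) * w'"
      "real N * th k * Hr P j z' + (1 - real N * th k) * Hr P j w'
         \<le> (1 - th k) * hh P u0 I k j + th k * Hr P j z + real N * th k * (Hr P j z' - Hr P j z)"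
      using inv_step_gen[OF hconv_hfun hz w(1) hz' _ _ thp th1 c0_nonneg[OF N1] Nth1 _ w(3)[unfolded Hr_def]]
        ak_range[OF N1, of k] thp[of k] unfolding Hr_def by auto
    have "uk P u0 I (Suc k) j = real N * th k * z' + (1 - real N * th k) * w'"
      using w'(2) w(2) by (simp add: uk_Suc vk_eq z_def z'_def)
    moreover have "hh P u0 I (Suc k) j = (1 - th k) * hh P u0 I k j + th k * Hr P j z + real N * th k * (Hr P j z' - Hr P j z)"
      by (simp add: z_def z'_def)
    ultimately show "hfun P j (zk P u0 I (Suc k) j) < \<infinity> \<and>
     (\<exists>w. hfun P j w < \<infinity> \<and> uk P u0 I (Suc k) j = ak N (Suc k) * zk P u0 I (Suc k) j + (1 - ak N (Suc k)) * w
        \<and> ak N (Suc k) * Hr P j (zk P u0 I (Suc k) j) + (1 - ak N (Suc k)) * Hr P j w \<le> hh P u0 I (Suc k) j)"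
      using hz' w'(1) w'(3) unfolding z'_def z_def ak_Suc by auto
  qed
qed

lemma zk_fin: "j < N \<Longrightarrow> hfun P j (zk P u0 I k j) < \<infinity>"
  using invariant by blast

lemma uk_fin: "j < N \<Longrightarrow> hfun P j (uk P u0 I k j) < \<infinity> \<and> Hr P j (uk P u0 I k j) \<le> hh P u0 I k j"
proof -
  assume j: "j < N"
  obtain w where w: "hfun P j w < \<infinity>" "uk P u0 I k j = ak N k * zk P u0 I k j + (1 - ak N k) * w"
      "ak N k * Hr P j (zk P u0 I k j) + (1 - ak N k) * Hr P j w \<le> hh P u0 I k j"
    using invariant j by blast
  have a: "0 \<le> 1 - ak N k" "1 - ak N k \<le> 1" using ak_range[OF N1, of k] by auto
  have e: "uk P u0 I k j = (1 - (1 - ak N k)) * zk P u0 I k j + (1 - ak N k) * w" using w(2) by simp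
  have "hfun P j ((1 - (1 - ak N k)) * zk P u0 I k j + (1 - ak N k) * w) < \<infinity> \<and>
    Hr P j ((1 - (1 - ak N k)) * zk P u0 I k j + (1 - ak N k) * w)
      \<le> (1 - (1 - ak N k)) * Hr P j (zk P u0 I k j) + (1 - ak N k) * Hr P j w"
    using hconv_hfun[of j] zk_fin[OF j] w(1) a unfolding hconv_def Hr_def by blast
  thus ?thesis using w(3) e by simp
qed

lemma vk_fin: "j < N \<Longrightarrow> hfun P j (vk P u0 I k j) < \<infinity>"
proof -
  assume j: "j < N"
  have a: "0 \<le> 1 - th k" "1 - th k \<le> 1" using thp[of k] th1[of k] by auto
  have e: "vk P u0 I k j = (1 - (1 - th k)) * zk P u0 I k j + (1 - th k) * uk P u0 I k j"
    by (simp add: vk_eq)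
  show ?thesis unfolding e using hconv_hfun[of j] zk_fin[OF j] uk_fin[OF j] a unfolding hconv_def by blast
qed

lemma fin_dualD: "(\<And>j. j < N \<Longrightarrow> hfun P j (x j) < \<infinity>) \<Longrightarrow> x \<in> dualD P"
  unfolding dualD_iff using hfun_G by auto

lemma zk_D: "zk P u0 I k \<in> dualD P" by (rule fin_dualD) (rule zk_fin)
lemma uk_D: "uk P u0 I k \<in> dualD P" by (rule fin_dualD) (use uk_fin in blast)
lemma vk_D: "vk P u0 I k \<in> dualD P" by (rule fin_dualD) (rule vk_fin)

lemma Dfun_fin: "(\<And>j. j < N \<Longrightarrow> hfun P j (x j) < \<infinity>) \<Longrightarrow> Dfun P x = ereal (dfun P x + (\<Sum>j<N. Hr P j (x j)))"
proof -
  assume f: "\<And>j. j < N \<Longrightarrow> hfun P j (x j) < \<infinity>"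
  have "(\<Sum>j<N. hfun P j (x j)) = (\<Sum>j<N. ereal (Hr P j (x j)))"
    by (rule sum.cong) (use f fin_ereal[OF hfun_nminf] in \<open>auto simp: Hr_def\<close>)
  thus ?thesis by (simp add: Dfun_def sum_ereal)
qed

end


lemma ardca_cong: "(\<forall>j<k. I j = I' j) \<Longrightarrow> ardca P u0 I k = ardca P u0 I' k"
  by (induction k) (auto simp: Let_def split: prod.split)

lemma zk_cong: "(\<forall>j<k. I j = I' j) \<Longrightarrow> zk P u0 I k = zk P u0 I' k"
  using ardca_cong[of k I I' P u0] by (simp add: zk_def)
lemma uk_cong: "(\<forall>j<k. I j = I' j) \<Longrightarrow> uk P u0 I k = uk P u0 I' k"
  using ardca_cong[of k I I' P u0] by (simp add: uk_def)
lemma vk_cong: "(\<forall>j<k. I j = I' j) \<Longrightarrow> vk P u0 I k = vk P u0 I' k"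
  using ardca_cong[of k I I' P u0] by (simp add: vk_def)
lemma hh_cong: "(\<forall>j<k. I j = I' j) \<Longrightarrow> hh P u0 I k = hh P u0 I' k"
proof (induction k)
  case 0 show ?case by (simp add: fun_eq_iff)
next
  case (Suc k)
  hence "hh P u0 I k = hh P u0 I' k" by simp
  moreover have "zk P u0 I k = zk P u0 I' k" "zk P u0 I (Suc k) = zk P u0 I' (Suc k)"
    using Suc.prems by (auto intro!: zk_cong)
  ultimately show ?case by (simp add: fun_eq_iff)
qed

lemma sum_upd2:
  fixes F :: "nat \<Rightarrow> real \<Rightarrow> real"
  shows "(\<Sum>i<N. \<Sum>j<N. F j ((z(i := a i)) j)) = (\<Sum>j<N. F j (a j) + (real N - 1) * F j (z j))"
proof -
  have "(\<Sum>i<N. \<Sum>j<N. F j ((z(i := a i)) j)) = (\<Sum>j<N. \<Sum>i<N. F j ((z(i := a i)) j))"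
    by (rule sum.swap)
  also have "\<dots> = (\<Sum>j<N. F j (a j) + (real N - 1) * F j (z j))"
  proof (rule sum.cong)
    fix j assume j: "j \<in> {..<N}"
    have "(\<Sum>i<N. F j ((z(i := a i)) j)) = (\<Sum>i<N. F j (z j) + (if i = j then F j (a j) - F j (z j) else 0))"
      by (rule sum.cong) auto
    also have "\<dots> = real N * F j (z j) + (F j (a j) - F j (z j))"
      using j by (simp add: sum.distrib)
    finally show "(\<Sum>i<N. F j ((z(i := a i)) j)) = F j (a j) + (real N - 1) * F j (z j)"
      by (simp add: algebra_simps)
  qed simp
  finally show ?thesis .
qed

locale actx3 = actx2 +
  fixes ustar :: "nat \<Rightarrow> real"
  assumes ustar_fin: "\<forall>j<nh P. hfun P j (ustar j) < \<infinity>"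
    and umin: "\<forall>u. Dfun P ustar \<le> Dfun P u"
begin

definition "Dst = dfun P ustar + (\<Sum>j<N. Hr P j (ustar j))"
definition "Phi I k = dfun P (uk P u0 I k) + (\<Sum>j<N. hh P u0 I k j) - Dst"
definition "Rn I k = (\<Sum>j<N. Lc P j * (zk P u0 I k j - ustar j)\<^sup>2)"
definition "Psi I k = inv_theta_sq_prev N k * Phi I k + (real N)\<^sup>2 * Rn I k"
definition "dl I k j = ztilde P (th k) (zk P u0 I k) (vk P u0 I k) j - zk P u0 I k j"
definition "Dl I k = (\<Sum>j<N. Lc P j * (dl I k j)\<^sup>2)"

lemma ustar_D: "ustar \<in> dualD P" using fin_dualD ustar_fin by blast

lemma Phi_nonneg: "Phi I k \<ge> 0"
proof -
  have "Dfun P ustar = ereal Dst" unfolding Dst_def by (rule Dfun_fin) (use ustar_fin in blast)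
  moreover have "Dfun P (uk P u0 I k) = ereal (dfun P (uk P u0 I k) + (\<Sum>j<N. Hr P j (uk P u0 I k j)))"
    by (rule Dfun_fin) (use uk_fin in blast)
  ultimately have "Dst \<le> dfun P (uk P u0 I k) + (\<Sum>j<N. Hr P j (uk P u0 I k j))"
    using umin by (metis ereal_less_eq(3))
  also have "(\<Sum>j<N. Hr P j (uk P u0 I k j)) \<le> (\<Sum>j<N. hh P u0 I k j)"
    by (rule sum_mono) (use uk_fin in blast)
  finally show ?thesis by (simp add: Phi_def)
qed

lemma Rn_nonneg: "Rn I k \<ge> 0"
  unfolding Rn_def using Lpos by (intro sum_nonneg) (simp add: less_imp_le)

lemma Dl_nonneg: "Dl I k \<ge> 0"
  unfolding Dl_def using Lpos by (intro sum_nonneg) (simp add: less_imp_le)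

lemma Psi_nonneg: "Psi I k \<ge> 0"
  unfolding Psi_def using Phi_nonneg Rn_nonneg ib_nonneg[OF N1] by simp

end


context actx3 begin

lemma one_step:
  "(\<Sum>i<N. Psi (I(k := i)) (Suc k)) / real N + real N / 2 * Dl I k \<le> Psi I k"
proof -
  define Ii where "Ii = (\<lambda>i. I(k := i))"
  have agree: "\<forall>j<k. Ii i j = I j" for i by (simp add: Ii_def)
  define z where "z = zk P u0 I k"
  define u where "u = uk P u0 I k"
  define v where "v = vk P u0 I k"
  define \<theta> where "\<theta> = th k"
  define zt where "zt = (\<lambda>j. ztilde P \<theta> z v j)"
  define \<delta> where "\<delta> = (\<lambda>j. zt j - z j)"
  define G where "G = (\<lambda>j. Gd P v j)"
  have tp: "\<theta> > 0" using thp by (simp add: \<theta>_def)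
  have Npos: "real N > 0" using N1 by simp
  have vD: "v \<in> dualD P" using vk_D by (simp add: v_def)
  have uD: "u \<in> dualD P" using uk_D by (simp add: u_def)
  have gr: "gradd P v j = G j" if "j < N" for j using gradd_eq[OF vD that] by (simp add: G_def)
  have zI: "zk P u0 (Ii i) k = z" for i unfolding z_def by (rule zk_cong[OF agree])
  have vI: "vk P u0 (Ii i) k = v" for i unfolding v_def by (rule vk_cong[OF agree])
  have hhI: "hh P u0 (Ii i) k = hh P u0 I k" for i by (rule hh_cong[OF agree])
  have zS: "zk P u0 (Ii i) (Suc k) = z(i := zt i)" for i
    using zk_Suc[of P u0 "Ii i" k] zI vI by (simp add: Ii_def zt_def \<theta>_def)
  have uS: "uk P u0 (Ii i) (Suc k) = v(i := v i + real N * \<theta> * \<delta> i)" for i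
    by (rule ext) (simp add: uk_Suc zS vI zI \<delta>_def \<theta>_def)
  have hhS: "hh P u0 (Ii i) (Suc k) j = (1 - \<theta>) * hh P u0 I k j + \<theta> * Hr P j (z j)
      + real N * \<theta> * (Hr P j ((z(i := zt i)) j) - Hr P j (z j))" for i j
    using zS[of i] by (simp add: hhI zI \<theta>_def)
  define dv where "dv = dfun P v"
  define du where "du = dfun P u"
  define ds where "ds = dfun P ustar"
  define SGd where "SGd = (\<Sum>j<N. G j * \<delta> j)"
  define SGs where "SGs = (\<Sum>j<N. (ustar j - v j) * G j)"
  define SGu where "SGu = (\<Sum>j<N. (u j - v j) * G j)"
  define SGz where "SGz = (\<Sum>j<N. G j * (ustar j - z j))"
  define Hh where "Hh = (\<Sum>j<N. hh P u0 I k j)"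
  define Hzt where "Hzt = (\<Sum>j<N. Hr P j (zt j))"
  define Hs where "Hs = (\<Sum>j<N. Hr P j (ustar j))"
  define R where "R = Rn I k"
  define Rt where "Rt = (\<Sum>j<N. Lc P j * (zt j - ustar j)\<^sup>2)"
  define \<Delta> where "\<Delta> = Dl I k"
  have R_eq: "R = (\<Sum>j<N. Lc P j * (z j - ustar j)\<^sup>2)" by (simp add: R_def Rn_def z_def)
  have \<Delta>_eq: "\<Delta> = (\<Sum>j<N. Lc P j * (\<delta> j)\<^sup>2)"
    by (simp add: \<Delta>_def Dl_def dl_def \<delta>_def zt_def z_def v_def \<theta>_def)
  have F1: "(\<Sum>i<N. dfun P (uk P u0 (Ii i) (Suc k))) \<le> real N * dv + real N * \<theta> * SGd + (real N * \<theta>)\<^sup>2 / 2 * \<Delta>"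
  proof -
    have "(\<Sum>i<N. dfun P (uk P u0 (Ii i) (Suc k)))
        \<le> (\<Sum>i<N. dv + real N * \<theta> * (G i * \<delta> i) + (real N * \<theta>)\<^sup>2 / 2 * (Lc P i * (\<delta> i)\<^sup>2))"
    proof (rule sum_mono)
      fix i assume i: "i \<in> {..<N}"
      have D': "v(i := v i + real N * \<theta> * \<delta> i) \<in> dualD P" using uk_D[of "Ii i" "Suc k"] uS by simp
      have "dfun P (v(i := v i + real N * \<theta> * \<delta> i))
          \<le> dfun P v + real N * \<theta> * \<delta> i * Gd P v i + Lc P i * (real N * \<theta> * \<delta> i)\<^sup>2 / 2"
        using dual_upper[OF vD D'] i by simp
      thus "dfun P (uk P u0 (Ii i) (Suc k)) \<le> dv + real N * \<theta> * (G i * \<delta> i) + (real N * \<theta>)\<^sup>2 / 2 * (Lc P i * (\<delta> i)\<^sup>2)"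
        unfolding uS by (simp add: dv_def G_def power_mult_distrib algebra_simps)
    qed
    also have "\<dots> = real N * dv + real N * \<theta> * SGd + (real N * \<theta>)\<^sup>2 / 2 * \<Delta>"
      by (simp add: sum.distrib sum_distrib_left[symmetric] sum_divide_distrib[symmetric] SGd_def \<Delta>_eq)
    finally show ?thesis .
  qed
  have F2: "(\<Sum>i<N. \<Sum>j<N. hh P u0 (Ii i) (Suc k) j) = real N * ((1 - \<theta>) * Hh + \<theta> * Hzt)"
  proof -
    define F where "F = (\<lambda>j x. (1 - \<theta>) * hh P u0 I k j + \<theta> * Hr P j (z j) + real N * \<theta> * (Hr P j x - Hr P j (z j)))"
    have "(\<Sum>i<N. \<Sum>j<N. hh P u0 (Ii i) (Suc k) j) = (\<Sum>i<N. \<Sum>j<N. F j ((z(i := zt i)) j))"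
      unfolding hhS F_def by simp
    also have "\<dots> = (\<Sum>j<N. F j (zt j) + (real N - 1) * F j (z j))" by (rule sum_upd2)
    also have "\<dots> = (\<Sum>j<N. real N * ((1 - \<theta>) * hh P u0 I k j + \<theta> * Hr P j (zt j)))"
      by (rule sum.cong) (simp_all add: F_def algebra_simps)
    also have "\<dots> = real N * ((1 - \<theta>) * Hh + \<theta> * Hzt)"
      by (simp add: Hh_def Hzt_def sum_distrib_left[symmetric] sum.distrib)
    finally show ?thesis .
  qed
  have F3: "real N * \<theta> * \<Delta> + SGd + Hzt + real N * \<theta> * Rt \<le> real N * \<theta> * R + SGz + Hs"
  proof -
    have "(\<Sum>j<N. real N * \<theta> * (Lc P j * (\<delta> j)\<^sup>2) + G j * \<delta> j + Hr P j (zt j) + real N * \<theta> * (Lc P j * (zt j - ustar j)\<^sup>2))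
        \<le> (\<Sum>j<N. real N * \<theta> * (Lc P j * (z j - ustar j)\<^sup>2) + G j * (ustar j - z j) + Hr P j (ustar j))"
    proof (rule sum_mono)
      fix j assume "j \<in> {..<N}"
      hence j: "j < N" by simp
      have c: "real N * \<theta> * Lc P j > 0" using Lpos j tp Npos by simp
      have tpj: "real N * \<theta> * Lc P j * (ustar j - z j)\<^sup>2 + gradd P v j * (ustar j - z j) + real_of_ereal (hfun P j (ustar j))
          \<ge> real N * \<theta> * Lc P j * (zt j - z j)\<^sup>2 + gradd P v j * (zt j - z j) + real_of_ereal (hfun P j (zt j))
            + real N * \<theta> * Lc P j * (ustar j - zt j)\<^sup>2"
        unfolding zt_def
        by (rule three_point(2)[OF hconv_hfun c ztilde_min[OF c] zk_fin[OF j, of I k, folded z_def]])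
           (use ustar_fin j in blast)
      have sq1: "(ustar j - z j)\<^sup>2 = (z j - ustar j)\<^sup>2" "(ustar j - zt j)\<^sup>2 = (zt j - ustar j)\<^sup>2"
        by (simp_all add: power2_commute)
      show "real N * \<theta> * (Lc P j * (\<delta> j)\<^sup>2) + G j * \<delta> j + Hr P j (zt j) + real N * \<theta> * (Lc P j * (zt j - ustar j)\<^sup>2)
        \<le> real N * \<theta> * (Lc P j * (z j - ustar j)\<^sup>2) + G j * (ustar j - z j) + Hr P j (ustar j)"
        using tpj unfolding gr[OF j] sq1 by (simp add: \<delta>_def Hr_def algebra_simps)
    qed
    thus ?thesis
      by (simp add: sum.distrib sum_distrib_left[symmetric] \<Delta>_eq SGd_def Hzt_def Rt_def R_eq SGz_def Hs_def)
  qed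
  have F4a: "ds \<ge> dv + SGs" using dual_lower[OF vD ustar_D] by (simp add: ds_def dv_def SGs_def G_def)
  have F4b: "du \<ge> dv + SGu" using dual_lower[OF vD uD] by (simp add: du_def dv_def SGu_def G_def)
  have vj: "v j = \<theta> * z j + (1 - \<theta>) * u j" for j by (simp add: v_def vk_eq z_def u_def \<theta>_def)
  have F5: "\<theta> * SGz = \<theta> * SGs + (1 - \<theta>) * SGu"
    unfolding SGz_def SGs_def SGu_def sum_distrib_left sum.distrib[symmetric]
    by (rule sum.cong) (simp_all add: vj algebra_simps)
  have F6: "(\<Sum>i<N. Rn (Ii i) (Suc k)) = Rt + (real N - 1) * R"
  proof -
    have "(\<Sum>i<N. Rn (Ii i) (Suc k)) = (\<Sum>i<N. \<Sum>j<N. (\<lambda>j x. Lc P j * (x - ustar j)\<^sup>2) j ((z(i := zt i)) j))"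
      by (simp add: Rn_def zS)
    also have "\<dots> = (\<Sum>j<N. Lc P j * (zt j - ustar j)\<^sup>2 + (real N - 1) * (Lc P j * (z j - ustar j)\<^sup>2))"
      by (rule sum_upd2)
    also have "\<dots> = Rt + (real N - 1) * R"
      by (simp add: sum.distrib sum_distrib_left[symmetric] Rt_def R_eq)
    finally show ?thesis .
  qed
  have Dst_eq: "Dst = ds + Hs" by (simp add: Dst_def ds_def Hs_def)
  have Phi_eq: "Phi I k = du + Hh - Dst" by (simp add: Phi_def du_def u_def Hh_def)
  define A where "A = (\<Sum>i<N. Phi (Ii i) (Suc k))"
  have A_eq: "A = (\<Sum>i<N. dfun P (uk P u0 (Ii i) (Suc k))) + (\<Sum>i<N. \<Sum>j<N. hh P u0 (Ii i) (Suc k) j) - real N * Dst"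
    by (simp add: A_def Phi_def sum.distrib sum_subtractf)
  have G1: "A / real N \<le> dv + \<theta> * SGd + real N * \<theta>\<^sup>2 / 2 * \<Delta> + (1 - \<theta>) * Hh + \<theta> * Hzt - Dst"
  proof -
    have "A \<le> real N * (dv + \<theta> * SGd + real N * \<theta>\<^sup>2 / 2 * \<Delta> + (1 - \<theta>) * Hh + \<theta> * Hzt - Dst)"
      using F1 unfolding A_eq F2 by (simp add: algebra_simps power2_eq_square)
    thus ?thesis using Npos by (simp add: field_simps)
  qed
  have G3: "\<theta> * SGd + \<theta> * Hzt \<le> real N * \<theta>\<^sup>2 * R + \<theta> * SGz + \<theta> * Hs - real N * \<theta>\<^sup>2 * \<Delta> - real N * \<theta>\<^sup>2 * Rt"
  proof -
    have "\<theta> * (real N * \<theta> * \<Delta> + SGd + Hzt + real N * \<theta> * Rt) \<le> \<theta> * (real N * \<theta> * R + SGz + Hs)"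
      using F3 tp by (intro mult_left_mono) auto
    thus ?thesis by (simp add: algebra_simps power2_eq_square)
  qed
  have G4: "dv + \<theta> * SGz \<le> \<theta> * ds + du - \<theta> * du"
  proof -
    have "\<theta> * (dv + SGs) \<le> \<theta> * ds" using F4a tp by (intro mult_left_mono) auto
    moreover have "(1 - \<theta>) * (dv + SGu) \<le> (1 - \<theta>) * du" using F4b th1[of k] by (intro mult_left_mono) (auto simp: \<theta>_def)
    ultimately show ?thesis unfolding F5 by (simp add: algebra_simps)
  qed
  have G5: "A / real N \<le> (1 - \<theta>) * Phi I k + real N * \<theta>\<^sup>2 * (R - Rt) - real N * \<theta>\<^sup>2 / 2 * \<Delta>"
  proof -
    have e: "(1 - \<theta>) * Phi I k = du + Hh - ds - Hs - \<theta> * du - \<theta> * Hh + \<theta> * ds + \<theta> * Hs"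
      unfolding Phi_eq Dst_eq by (simp add: algebra_simps)
    have e2: "real N * \<theta>\<^sup>2 * (R - Rt) = real N * \<theta>\<^sup>2 * R - real N * \<theta>\<^sup>2 * Rt" by (simp add: algebra_simps)
    have e3: "(1 - \<theta>) * Hh = Hh - \<theta> * Hh" by (simp add: algebra_simps)
    have e4: "real N * \<theta>\<^sup>2 / 2 * \<Delta> = (real N * \<theta>\<^sup>2 * \<Delta>) / 2" by simp
    show ?thesis using G1 G3 G4 e e2 e3 e4 unfolding Dst_eq by linarith
  qed
  have ib: "inv_theta_sq_prev N k = (1 - \<theta>) / \<theta>\<^sup>2" using ib_eq[OF N1] by (simp add: \<theta>_def)
  have ibS: "inv_theta_sq_prev N (Suc k) = 1 / \<theta>\<^sup>2" using ib_Suc[OF N1] by (simp add: \<theta>_def)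
  have G6: "1 / \<theta>\<^sup>2 * (A / real N) \<le> inv_theta_sq_prev N k * Phi I k + real N * (R - Rt) - real N / 2 * \<Delta>"
  proof -
    have "1 / \<theta>\<^sup>2 * (A / real N) \<le> 1 / \<theta>\<^sup>2 * ((1 - \<theta>) * Phi I k + real N * \<theta>\<^sup>2 * (R - Rt) - real N * \<theta>\<^sup>2 / 2 * \<Delta>)"
      using G5 by (intro mult_left_mono) auto
    also have "\<dots> = inv_theta_sq_prev N k * Phi I k + real N * (R - Rt) - real N / 2 * \<Delta>"
      unfolding ib using tp by (simp add: field_simps power2_eq_square)
    finally show ?thesis .
  qed
  have sumPsi: "(\<Sum>i<N. Psi (I(k := i)) (Suc k)) = 1 / \<theta>\<^sup>2 * A + (real N)\<^sup>2 * (Rt + (real N - 1) * R)"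
    unfolding F6[symmetric] A_def Psi_def ibS Ii_def by (simp add: sum.distrib sum_distrib_left)
  have "(\<Sum>i<N. Psi (I(k := i)) (Suc k)) / real N = 1 / \<theta>\<^sup>2 * (A / real N) + real N * Rt + real N * (real N - 1) * R"
    unfolding sumPsi using Npos by (simp add: field_simps power2_eq_square)
  also have "\<dots> \<le> inv_theta_sq_prev N k * Phi I k + real N * (R - Rt) - real N / 2 * \<Delta> + real N * Rt + real N * (real N - 1) * R"
    using G6 by simp
  also have "\<dots> = Psi I k - real N / 2 * \<Delta>"
    by (simp add: Psi_def R_def power2_eq_square algebra_simps)
  finally show ?thesis by (simp add: \<Delta>_def)
qed

end


definition EE :: "nat \<Rightarrow> nat \<Rightarrow> ((nat \<Rightarrow> nat) \<Rightarrow> real) \<Rightarrow> real" where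
  "EE N k X = (\<Sum>I\<in>PiE {..<k} (\<lambda>_. {..<N}). X I) / real N ^ k"

lemma expect_xi_Ex: "expect_xi N K X = EE N (Suc K) X"
  by (simp add: expect_xi_def EE_def lessThan_Suc_atMost)

lemma EE_0: "EE N 0 X = X (\<lambda>_. undefined)"
  by (simp add: EE_def)

lemma sum_PiE_Suc:
  "(\<Sum>I\<in>PiE {..<Suc k} T. X I) = (\<Sum>I\<in>PiE {..<k} T. \<Sum>i\<in>T k. X (I(k := i)))"
proof -
  have "PiE {..<Suc k} T = PiE (insert k {..<k}) T" by (simp add: lessThan_Suc)
  also have "\<dots> = (\<lambda>(y, g). g(k := y)) ` (T k \<times> PiE {..<k} T)" by (rule PiE_insert_eq)
  finally have e: "PiE {..<Suc k} T = (\<lambda>(y, g). g(k := y)) ` (T k \<times> PiE {..<k} T)" .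
  have inj: "inj_on (\<lambda>(y, g). g(k := y)) (T k \<times> PiE {..<k} T)" by (rule inj_combinator) simp
  have "(\<Sum>I\<in>PiE {..<Suc k} T. X I) = (\<Sum>p\<in>T k \<times> PiE {..<k} T. X ((\<lambda>(y, g). g(k := y)) p))"
    unfolding e by (rule sum.reindex[OF inj, unfolded comp_def])
  also have "\<dots> = (\<Sum>i\<in>T k. \<Sum>I\<in>PiE {..<k} T. X (I(k := i)))"
    by (simp add: sum.cartesian_product split_def)
  also have "\<dots> = (\<Sum>I\<in>PiE {..<k} T. \<Sum>i\<in>T k. X (I(k := i)))" by (rule sum.swap)
  finally show ?thesis .
qed

definition dep :: "nat \<Rightarrow> ((nat \<Rightarrow> nat) \<Rightarrow> real) \<Rightarrow> bool" where
  "dep k X \<longleftrightarrow> (\<forall>I I'. (\<forall>j<k. I j = I' j) \<longrightarrow> X I = X I')"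

context
  fixes N :: nat
  assumes N1: "N \<ge> 1"
begin

lemma EE_Suc: "EE N (Suc k) X = EE N k (\<lambda>I. (\<Sum>i<N. X (I(k := i))) / real N)"
proof -
  have "EE N (Suc k) X = (\<Sum>I\<in>PiE {..<k} (\<lambda>_. {..<N}). \<Sum>i<N. X (I(k := i))) / real N ^ Suc k"
    unfolding EE_def sum_PiE_Suc by simp
  also have "\<dots> = (\<Sum>I\<in>PiE {..<k} (\<lambda>_. {..<N}). (\<Sum>i<N. X (I(k := i))) / real N) / real N ^ k"
    using N1 by (simp add: sum_divide_distrib[symmetric] field_simps)
  finally show ?thesis unfolding EE_def .
qed

lemma EE_mono: "(\<And>I. X I \<le> Y I) \<Longrightarrow> EE N k X \<le> EE N k Y"
  unfolding EE_def by (intro divide_right_mono sum_mono) auto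

lemma EE_lin: "EE N k (\<lambda>I. a * X I + b * Y I) = a * EE N k X + b * EE N k Y"
  unfolding EE_def by (simp add: sum.distrib sum_distrib_left[symmetric] add_divide_distrib)

lemma EE_const: "EE N k (\<lambda>I. c) = c"
proof -
  have "card (PiE {..<k} (\<lambda>_. {..<N})) = N ^ k" by (simp add: card_PiE)
  thus ?thesis unfolding EE_def using N1 by simp
qed

lemma EE_nonneg: "(\<And>I. X I \<ge> 0) \<Longrightarrow> EE N k X \<ge> 0"
  using EE_mono[of "\<lambda>_. 0" X k] EE_const[of k 0] by simp

lemma EE_dep_Suc: "dep k X \<Longrightarrow> EE N (Suc k) X = EE N k X"
proof -
  assume d: "dep k X"
  have "(\<Sum>i<N. X (I(k := i))) / real N = X I" for I
  proof -
    have "X (I(k := i)) = X I" for i using d unfolding dep_def by auto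
    thus ?thesis using N1 by simp
  qed
  thus ?thesis unfolding EE_Suc by simp
qed

lemma dep_mono: "dep k X \<Longrightarrow> k \<le> k' \<Longrightarrow> dep k' X"
  unfolding dep_def by auto

lemma EE_dep: "k \<le> k' \<Longrightarrow> dep k X \<Longrightarrow> EE N k' X = EE N k X"
proof (induction k' rule: dec_induct)
  case base thus ?case by simp
next
  case (step m)
  thus ?case using EE_dep_Suc[OF dep_mono[OF \<open>dep k X\<close> \<open>k \<le> m\<close>]] by simp
qed

end


context actx3 begin

lemma dep_Psi: "dep k (\<lambda>I. Psi I k)"
  unfolding dep_def
proof (intro allI impI)
  fix I I' :: "nat \<Rightarrow> nat" assume h: "\<forall>j<k. I j = I' j"
  show "Psi I k = Psi I' k"
    unfolding Psi_def Phi_def Rn_def uk_cong[OF h] zk_cong[OF h] hh_cong[OF h] ..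
qed

lemma dep_Rn: "dep k (\<lambda>I. Rn I k)"
  unfolding dep_def
proof (intro allI impI)
  fix I I' :: "nat \<Rightarrow> nat" assume h: "\<forall>j<k. I j = I' j"
  show "Rn I k = Rn I' k" unfolding Rn_def zk_cong[OF h] ..
qed

lemma dl_cong: "\<forall>j<k. I j = I' j \<Longrightarrow> dl I k = dl I' k"
proof -
  assume h: "\<forall>j<k. I j = I' j"
  show ?thesis unfolding dl_def zk_cong[OF h] vk_cong[OF h] ..
qed

lemma dep_Dl: "dep k (\<lambda>I. Dl I k)"
  unfolding dep_def
proof (intro allI impI)
  fix I I' :: "nat \<Rightarrow> nat" assume h: "\<forall>j<k. I j = I' j"
  show "Dl I k = Dl I' k" unfolding Dl_def dl_cong[OF h] ..
qed

definition "Psi0 = Psi (\<lambda>_. undefined) 0"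

lemma Psi_0: "Psi I 0 = Psi0"
  unfolding Psi0_def using dep_Psi[of 0] unfolding dep_def by blast

lemma tele_step: "EE N (Suc k) (\<lambda>I. Psi I (Suc k)) + real N / 2 * EE N k (\<lambda>I. Dl I k) \<le> EE N k (\<lambda>I. Psi I k)"
proof -
  have "EE N (Suc k) (\<lambda>I. Psi I (Suc k)) = EE N k (\<lambda>I. (\<Sum>i<N. Psi (I(k := i)) (Suc k)) / real N)"
    by (rule EE_Suc[OF N1])
  also have "\<dots> \<le> EE N k (\<lambda>I. 1 * Psi I k + (- (real N / 2)) * Dl I k)"
  proof (rule EE_mono[OF N1])
    fix I
    show "(\<Sum>i<N. Psi (I(k := i)) (Suc k)) / real N \<le> 1 * Psi I k + - (real N / 2) * Dl I k"
      using one_step[of I k] by simp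
  qed
  also have "\<dots> = EE N k (\<lambda>I. Psi I k) - real N / 2 * EE N k (\<lambda>I. Dl I k)"
    unfolding EE_lin[OF N1] by simp
  finally show ?thesis by simp
qed

lemma tele: "K0 \<le> K \<Longrightarrow> EE N (Suc K) (\<lambda>I. Psi I (Suc K)) + real N / 2 * (\<Sum>k=K0..K. EE N k (\<lambda>I. Dl I k))
    \<le> EE N K0 (\<lambda>I. Psi I K0)"
proof (induction K rule: dec_induct)
  case base thus ?case using tele_step[of K0] by simp
next
  case (step K)
  have "EE N (Suc (Suc K)) (\<lambda>I. Psi I (Suc (Suc K))) + real N / 2 * EE N (Suc K) (\<lambda>I. Dl I (Suc K))
      \<le> EE N (Suc K) (\<lambda>I. Psi I (Suc K))" by (rule tele_step)
  thus ?case using step by (simp add: distrib_left)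
qed

lemma EPsi_le: "EE N k (\<lambda>I. Psi I k) \<le> Psi0"
proof (induction k)
  case 0 thus ?case using Psi_0 by (simp add: EE_0)
next
  case (Suc k)
  have "EE N k (\<lambda>I. Dl I k) \<ge> 0" by (rule EE_nonneg[OF N1]) (rule Dl_nonneg)
  hence "real N / 2 * EE N k (\<lambda>I. Dl I k) \<ge> 0" by simp
  thus ?case using tele_step[of k] Suc by linarith
qed

lemma Psi0_nonneg: "Psi0 \<ge> 0" using Psi_nonneg by (simp add: Psi0_def)

lemma ERn_le: "(real N)\<^sup>2 * EE N k (\<lambda>I. Rn I k) \<le> Psi0"
proof -
  have "EE N k (\<lambda>I. (real N)\<^sup>2 * Rn I k + 0 * Rn I k) \<le> EE N k (\<lambda>I. Psi I k)"
  proof (rule EE_mono[OF N1])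
    fix I
    have "inv_theta_sq_prev N k * Phi I k \<ge> 0" using Phi_nonneg ib_nonneg[OF N1] by simp
    thus "(real N)\<^sup>2 * Rn I k + 0 * Rn I k \<le> Psi I k" unfolding Psi_def by simp
  qed
  thus ?thesis using EPsi_le[of k] unfolding EE_lin[OF N1] by simp
qed

lemma EDl_sum: "K0 \<le> K \<Longrightarrow> real N / 2 * (\<Sum>k=K0..K. EE N k (\<lambda>I. Dl I k)) \<le> Psi0"
proof -
  assume "K0 \<le> K"
  have "EE N (Suc K) (\<lambda>I. Psi I (Suc K)) \<ge> 0" by (rule EE_nonneg[OF N1]) (rule Psi_nonneg)
  thus ?thesis using tele[OF \<open>K0 \<le> K\<close>] EPsi_le[of K0] by linarith
qed

end


context
  fixes N :: nat
  assumes N1: "N \<ge> 1"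
begin

lemma EE_add: "EE N k (\<lambda>I. X I + Y I) = EE N k X + EE N k Y"
  using EE_lin[OF N1, of k 1 X 1 Y] by simp

lemma EE_cmult: "EE N k (\<lambda>I. c * X I) = c * EE N k X"
  using EE_lin[OF N1, of k c X 0 X] by simp

end

context actx3 begin

definition "Wv K0 I k j = (\<Sum>l\<in>{K0..<k}. dl I l j) - real N * (zk P u0 I k j - zk P u0 I K0 j)"
definition "WN K0 I k = (\<Sum>j<N. Lc P j * (Wv K0 I k j)\<^sup>2)"

lemma W_step:
  assumes K0k: "K0 \<le> k"
  shows "(\<Sum>i<N. WN K0 (I(k := i)) (Suc k)) / real N = WN K0 I k + (real N - 1) * Dl I k"
proof -
  define Ii where "Ii = (\<lambda>i. I(k := i))"
  have agree: "\<forall>j<k. Ii i j = I j" for i by (simp add: Ii_def)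
  define z where "z = zk P u0 I k"
  define a where "a = Wv K0 I k"
  define b where "b = dl I k"
  have dlI: "dl (Ii i) l = dl I l" if "l \<le> k" for i l
    using dl_cong[of l "Ii i" I] agree that by auto
  have zI: "zk P u0 (Ii i) k = z" for i unfolding z_def by (rule zk_cong[OF agree])
  have z0I: "zk P u0 (Ii i) K0 = zk P u0 I K0" for i using zk_cong[of K0 "Ii i" I] agree K0k by auto
  have vI: "vk P u0 (Ii i) k = vk P u0 I k" for i by (rule vk_cong[OF agree])
  have zS: "zk P u0 (Ii i) (Suc k) j - z j = ((\<lambda>_. 0)(i := b i)) j" for i j
    using zk_Suc[of P u0 "Ii i" k] zI vI by (simp add: Ii_def b_def dl_def z_def)
  have Wv': "Wv K0 (Ii i) (Suc k) j = a j + b j - real N * ((\<lambda>_. 0)(i := b i)) j" for i j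
  proof -
    have "(\<Sum>l\<in>{K0..<Suc k}. dl (Ii i) l j) = (\<Sum>l\<in>{K0..<k}. dl I l j) + b j"
      using K0k dlI by (simp add: b_def)
    moreover have "zk P u0 (Ii i) (Suc k) j = z j + ((\<lambda>_. 0)(i := b i)) j" using zS[of i j] by simp
    ultimately show ?thesis unfolding Wv_def a_def z0I by (simp add: z_def algebra_simps)
  qed
  define F where "F = (\<lambda>j x. Lc P j * (a j + b j - real N * x)\<^sup>2)"
  have "(\<Sum>i<N. WN K0 (Ii i) (Suc k)) = (\<Sum>i<N. \<Sum>j<N. F j (((\<lambda>_. 0)(i := b i)) j))"
    unfolding WN_def Wv' F_def ..
  also have "\<dots> = (\<Sum>j<N. F j (b j) + (real N - 1) * F j 0)" by (rule sum_upd2)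
  also have "\<dots> = (\<Sum>j<N. real N * (Lc P j * (a j)\<^sup>2) + real N * ((real N - 1) * (Lc P j * (b j)\<^sup>2)))"
    by (rule sum.cong) (simp_all add: F_def power2_eq_square algebra_simps)
  also have "\<dots> = real N * (WN K0 I k + (real N - 1) * Dl I k)"
    by (simp add: sum.distrib sum_distrib_left[symmetric] WN_def Dl_def a_def b_def distrib_left)
  finally show ?thesis using N1 by (simp add: Ii_def)
qed

lemma WN_K0: "WN K0 I K0 = 0" by (simp add: WN_def Wv_def)

lemma EW_step: "K0 \<le> k \<Longrightarrow> EE N (Suc k) (\<lambda>I. WN K0 I (Suc k)) = EE N k (\<lambda>I. WN K0 I k) + (real N - 1) * EE N k (\<lambda>I. Dl I k)"
proof -
  assume "K0 \<le> k"
  have "EE N (Suc k) (\<lambda>I. WN K0 I (Suc k)) = EE N k (\<lambda>I. 1 * WN K0 I k + (real N - 1) * Dl I k)"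
    unfolding EE_Suc[OF N1] using W_step[OF \<open>K0 \<le> k\<close>] by simp
  thus ?thesis unfolding EE_lin[OF N1] by simp
qed

lemma EW: "K0 \<le> K \<Longrightarrow> EE N (Suc K) (\<lambda>I. WN K0 I (Suc K)) = (real N - 1) * (\<Sum>k=K0..K. EE N k (\<lambda>I. Dl I k))"
proof (induction K rule: dec_induct)
  case base
  show ?case using EW_step[of K0 K0] by (simp add: WN_K0 EE_const[OF N1])
next
  case (step K)
  thus ?case using EW_step[of K0 "Suc K"] by (simp add: distrib_left)
qed

lemma sq_sum_le: "(x + y)\<^sup>2 \<le> 2 * x\<^sup>2 + 2 * (y::real)\<^sup>2"
proof -
  have "0 \<le> (x - y)\<^sup>2" by simp
  thus ?thesis by (simp add: power2_eq_square algebra_simps)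
qed

lemma main_bound:
  assumes K: "K0 \<le> K"
  shows "EE N (Suc K) (\<lambda>I. \<Sum>j<N. Lc P j * (\<Sum>k=K0..K. dl I k j)\<^sup>2) \<le> 12 * Psi0"
proof -
  have pw: "(\<Sum>j<N. Lc P j * (\<Sum>k=K0..K. dl I k j)\<^sup>2)
      \<le> 4 * (real N)\<^sup>2 * Rn I (Suc K) + 4 * (real N)\<^sup>2 * Rn I K0 + 2 * WN K0 I (Suc K)" for I
  proof -
    have "(\<Sum>j<N. Lc P j * (\<Sum>k=K0..K. dl I k j)\<^sup>2)
      \<le> (\<Sum>j<N. 4 * (real N)\<^sup>2 * (Lc P j * (zk P u0 I (Suc K) j - ustar j)\<^sup>2)
             + 4 * (real N)\<^sup>2 * (Lc P j * (zk P u0 I K0 j - ustar j)\<^sup>2) + 2 * (Lc P j * (Wv K0 I (Suc K) j)\<^sup>2))"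
    proof (rule sum_mono)
      fix j assume "j \<in> {..<N}"
      hence L0: "Lc P j \<ge> 0" using Lpos by (simp add: less_imp_le)
      define p where "p = zk P u0 I (Suc K) j - ustar j"
      define q where "q = zk P u0 I K0 j - ustar j"
      have e: "(\<Sum>k=K0..K. dl I k j) = real N * (p - q) + Wv K0 I (Suc K) j"
        unfolding Wv_def p_def q_def using K by (simp add: atLeastLessThanSuc_atLeastAtMost algebra_simps)
      have "(\<Sum>k=K0..K. dl I k j)\<^sup>2 \<le> 2 * (real N * (p - q))\<^sup>2 + 2 * (Wv K0 I (Suc K) j)\<^sup>2"
        unfolding e by (rule sq_sum_le)
      also have "(real N * (p - q))\<^sup>2 = (real N)\<^sup>2 * (p + (- q))\<^sup>2" by (simp add: power_mult_distrib)
      also have "(real N)\<^sup>2 * (p + (- q))\<^sup>2 \<le> (real N)\<^sup>2 * (2 * p\<^sup>2 + 2 * (- q)\<^sup>2)"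
        by (intro mult_left_mono sq_sum_le) simp
      finally have "(\<Sum>k=K0..K. dl I k j)\<^sup>2 \<le> 4 * (real N)\<^sup>2 * p\<^sup>2 + 4 * (real N)\<^sup>2 * q\<^sup>2 + 2 * (Wv K0 I (Suc K) j)\<^sup>2"
        by (simp add: algebra_simps)
      hence "Lc P j * (\<Sum>k=K0..K. dl I k j)\<^sup>2 \<le> Lc P j * (4 * (real N)\<^sup>2 * p\<^sup>2 + 4 * (real N)\<^sup>2 * q\<^sup>2 + 2 * (Wv K0 I (Suc K) j)\<^sup>2)"
        using L0 by (rule mult_left_mono)
      thus "Lc P j * (\<Sum>k=K0..K. dl I k j)\<^sup>2 \<le> 4 * (real N)\<^sup>2 * (Lc P j * (zk P u0 I (Suc K) j - ustar j)\<^sup>2)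
             + 4 * (real N)\<^sup>2 * (Lc P j * (zk P u0 I K0 j - ustar j)\<^sup>2) + 2 * (Lc P j * (Wv K0 I (Suc K) j)\<^sup>2)"
        by (simp add: p_def q_def algebra_simps)
    qed
    also have "\<dots> = 4 * (real N)\<^sup>2 * Rn I (Suc K) + 4 * (real N)\<^sup>2 * Rn I K0 + 2 * WN K0 I (Suc K)"
      by (simp add: sum.distrib sum_distrib_left[symmetric] Rn_def WN_def)
    finally show ?thesis .
  qed
  have "EE N (Suc K) (\<lambda>I. \<Sum>j<N. Lc P j * (\<Sum>k=K0..K. dl I k j)\<^sup>2)
      \<le> EE N (Suc K) (\<lambda>I. 4 * (real N)\<^sup>2 * Rn I (Suc K) + 4 * (real N)\<^sup>2 * Rn I K0 + 2 * WN K0 I (Suc K))"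
    by (rule EE_mono[OF N1]) (rule pw)
  also have "\<dots> = 4 * ((real N)\<^sup>2 * EE N (Suc K) (\<lambda>I. Rn I (Suc K))) + 4 * ((real N)\<^sup>2 * EE N (Suc K) (\<lambda>I. Rn I K0))
      + 2 * EE N (Suc K) (\<lambda>I. WN K0 I (Suc K))"
    by (simp add: EE_add[OF N1] EE_cmult[OF N1] mult.assoc)
  also have "EE N (Suc K) (\<lambda>I. Rn I K0) = EE N K0 (\<lambda>I. Rn I K0)"
    using EE_dep[OF N1 _ dep_Rn, of K0 "Suc K"] K by simp
  finally have A: "EE N (Suc K) (\<lambda>I. \<Sum>j<N. Lc P j * (\<Sum>k=K0..K. dl I k j)\<^sup>2)
     \<le> 4 * ((real N)\<^sup>2 * EE N (Suc K) (\<lambda>I. Rn I (Suc K))) + 4 * ((real N)\<^sup>2 * EE N K0 (\<lambda>I. Rn I K0))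
      + 2 * EE N (Suc K) (\<lambda>I. WN K0 I (Suc K))" .
  have B: "EE N (Suc K) (\<lambda>I. WN K0 I (Suc K)) \<le> 2 * Psi0"
  proof -
    define S where "S = (\<Sum>k=K0..K. EE N k (\<lambda>I. Dl I k))"
    have S0: "S \<ge> 0" unfolding S_def
      by (intro sum_nonneg) (rule EE_nonneg[OF N1], rule Dl_nonneg)
    have "real N / 2 * S \<le> Psi0" using EDl_sum[OF K] by (simp add: S_def)
    hence "real N * S \<le> 2 * Psi0" by simp
    moreover have "(real N - 1) * S \<le> real N * S" using S0 by (simp add: mult_right_mono)
    ultimately show ?thesis using EW[OF K] by (simp add: S_def)
  qed
  show ?thesis using A B ERn_le[of "Suc K"] ERn_le[of K0] by linarith
qed

end


context actx3 begin

lemma dl_rel: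
  fixes k :: nat and I :: "nat \<Rightarrow> nat"
  assumes j: "j < N"
  defines "c \<equiv> real N * th k * Lc P j"
  shows "pn P \<le> j \<Longrightarrow> j < pn P + pp P \<Longrightarrow> - Gd P (vk P u0 I k) j = 2 * c * dl I k j"
    and "pn P + pp P \<le> j \<Longrightarrow> - Gd P (vk P u0 I k) j \<le> 2 * c * dl I k j"
proof -
  define z where "z = zk P u0 I k"
  define v where "v = vk P u0 I k"
  define zt where "zt = ztilde P (th k) z v j"
  define G where "G = gradd P v j"
  have cp: "c > 0" using Lpos j thp N1 by (simp add: c_def)
  have Gd: "Gd P v j = G" using gradd_eq[OF vk_D j] by (simp add: G_def v_def)
  have dl: "dl I k j = zt - z j" by (simp add: dl_def zt_def z_def v_def)
  have mn: "\<forall>w'. ereal (c * (zt - z j)\<^sup>2 + G * (zt - z j)) + hfun P j zt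
      \<le> ereal (c * (w' - z j)\<^sup>2 + G * (w' - z j)) + hfun P j w'"
    using ztilde_min[OF cp[unfolded c_def], of z v] by (simp add: c_def zt_def G_def)
  have zf: "hfun P j (z j) < \<infinity>" using zk_fin[OF j] by (simp add: z_def)
  note tp = three_point[OF hconv_hfun cp mn zf]
  have ztf: "hfun P j zt < \<infinity>" using tp(1) .
  {
    assume B: "pn P \<le> j" "j < pn P + pp P"
    have h0: "hfun P j w = 0" for w using hfun_B[OF B] .
    have "c * (zt + 1 - z j)\<^sup>2 + G * (zt + 1 - z j) \<ge> c * (zt - z j)\<^sup>2 + G * (zt - z j) + c * (zt + 1 - zt)\<^sup>2"
      using tp(2)[of "zt + 1"] h0 by simp
    hence a: "2 * c * (zt - z j) + G \<ge> 0" by (simp add: power2_eq_square algebra_simps)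
    have "c * (zt - 1 - z j)\<^sup>2 + G * (zt - 1 - z j) \<ge> c * (zt - z j)\<^sup>2 + G * (zt - z j) + c * (zt - 1 - zt)\<^sup>2"
      using tp(2)[of "zt - 1"] h0 by simp
    hence b: "2 * c * (zt - z j) + G \<le> 0" by (simp add: power2_eq_square algebra_simps)
    show "- Gd P (vk P u0 I k) j = 2 * c * dl I k j"
      using a b Gd dl by (simp add: v_def)
  }
  {
    assume g: "pn P + pp P \<le> j"
    have "zt \<ge> 0" using ztf hfun_G[OF g] by simp
    hence "hfun P j (zt + 1) < \<infinity>" using hfun_G[OF g] by simp
    hence "c * (zt + 1 - z j)\<^sup>2 + G * (zt + 1 - z j) + real_of_ereal (hfun P j (zt + 1))
        \<ge> c * (zt - z j)\<^sup>2 + G * (zt - z j) + real_of_ereal (hfun P j zt) + c * (zt + 1 - zt)\<^sup>2"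
      using tp(2) by blast
    moreover have "hfun P j (zt + 1) = 0" "hfun P j zt = 0" using \<open>zt \<ge> 0\<close> g by (simp_all add: hfun_def)
    ultimately have "2 * c * (zt - z j) + G \<ge> 0" by (simp add: power2_eq_square algebra_simps)
    thus "- Gd P (vk P u0 I k) j \<le> 2 * c * dl I k j"
      using Gd dl by (simp add: v_def)
  }
qed

end


context actx3 begin

lemma infeas_bound:
  fixes I :: "nat \<Rightarrow> nat"
  assumes K: "K0 \<le> K" and j: "j < N"
  defines "S \<equiv> (\<Sum>k=K0..K. 1 / th k)"
  shows "(infeas P (xhat P u0 I K0 K) (yhat P u0 I K0 K) j)\<^sup>2
     \<le> (2 * real N * Lc P j / S * (\<Sum>k=K0..K. dl I k j))\<^sup>2"
proof -
  have Sp: "S > 0" unfolding S_def by (rule sum_inv_theta_pos[OF N1 K])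
  define w where "w = (\<lambda>k. (1 / th k) / S)"
  define x where "x = (\<lambda>k. xstar P (vk P u0 I k))"
  define c where "c = (\<lambda>k. real N * th k * Lc P j)"
  define \<delta> where "\<delta> = (\<lambda>k. dl I k j)"
  define Gk where "Gk = (\<lambda>k. Gd P (vk P u0 I k) j)"
  have w0: "w k \<ge> 0" for k using thp[of k] Sp by (simp add: w_def)
  have "(\<Sum>k=K0..K. w k) = (\<Sum>k=K0..K. 1 / th k) / S" unfolding w_def by (rule sum_divide_distrib[symmetric])
  hence sw: "(\<Sum>k=K0..K. w k) = 1" using Sp by (simp add: S_def)
  have xh: "xhat P u0 I K0 K = (\<Sum>k=K0..K. w k *\<^sub>R x k)"
    unfolding xhat_def scaleR_sum_right scaleR_scaleR
  proof (rule sum.cong)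
    fix k
    show "((1 / (\<Sum>k = K0..K. 1 / th k)) * (1 / th k)) *\<^sub>R xstar P (vk P u0 I k) = w k *\<^sub>R x k"
      by (simp add: w_def x_def S_def)
  qed simp
  have cfx: "cf P j (x k) = - Gk k" for k by (simp add: Gk_def Gd_def x_def)
  define RHS where "RHS = (\<Sum>k=K0..K. w k * (2 * c k * \<delta> k))"
  have RHS_eq: "RHS = 2 * real N * Lc P j / S * (\<Sum>k=K0..K. dl I k j)"
  proof -
    have "RHS = (\<Sum>k=K0..K. 2 * real N * Lc P j / S * \<delta> k)"
      unfolding RHS_def
    proof (rule sum.cong)
      fix k assume "k \<in> {K0..K}"
      have tk: "th k \<noteq> 0" using thp[of k] by simp
      show "w k * (2 * c k * \<delta> k) = 2 * real N * Lc P j / S * \<delta> k"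
        using tk Sp by (simp add: w_def c_def field_simps)
    qed simp
    thus ?thesis by (simp only: \<delta>_def sum_distrib_left)
  qed
  have lin: "cf P j (\<Sum>k=K0..K. w k *\<^sub>R x k) = (\<Sum>k=K0..K. w k * cf P j (x k))" if jj: "j < pn P + pp P"
  proof (cases "j < pn P")
    case True
    thus ?thesis by (simp add: cf_def inner_sum_right sum_divide_distrib)
  next
    case False
    have "pB P (j - pn P) \<bullet> (\<Sum>k=K0..K. w k *\<^sub>R x k) + pb P (j - pn P)
        = (\<Sum>k=K0..K. w k * (pB P (j - pn P) \<bullet> x k)) + (\<Sum>k=K0..K. w k) * pb P (j - pn P)"
      using sw by (simp add: inner_sum_right)
    also have "\<dots> = (\<Sum>k=K0..K. w k * (pB P (j - pn P) \<bullet> x k + pb P (j - pn P)))"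
      by (simp add: sum_distrib_right sum.distrib[symmetric] distrib_left)
    finally show ?thesis using False jj by (simp add: cf_def)
  qed
  consider (a) "j < pn P" | (b) "\<not> j < pn P" "j < pn P + pp P" | (g) "\<not> j < pn P + pp P" by linarith
  then have main: "(infeas P (xhat P u0 I K0 K) (yhat P u0 I K0 K) j)\<^sup>2 \<le> RHS\<^sup>2"
  proof cases
    case a
    have n0: "real (pn P) > 0" using n_pos .
    have yk: "yk P u0 I k j = - 2 * c k * \<delta> k - Gk k" for k
      unfolding yk_def Let_def c_def \<delta>_def dl_def Gk_def
      using gradd_eq[OF vk_D j] by simp
    have "infeas P (xhat P u0 I K0 K) (yhat P u0 I K0 K) j
        = cf P j (xhat P u0 I K0 K) - yhat P u0 I K0 K j / real (pn P)"
      using a by (simp add: infeas_def cf_def diff_divide_distrib)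
    also have "cf P j (xhat P u0 I K0 K) = (\<Sum>k=K0..K. w k * (- Gk k))"
      unfolding xh using lin a by (simp add: cfx)
    also have "yhat P u0 I K0 K j / real (pn P) = (\<Sum>k=K0..K. w k * yk P u0 I k j)"
    proof -
      have "yhat P u0 I K0 K j / real (pn P) = (\<Sum>k=K0..K. real (pn P) * yk P u0 I k j / th k) / S / real (pn P)"
        by (simp add: yhat_def S_def)
      also have "\<dots> = (\<Sum>k=K0..K. real (pn P) * yk P u0 I k j / th k / S / real (pn P))"
        by (simp add: sum_divide_distrib)
      also have "\<dots> = (\<Sum>k=K0..K. w k * yk P u0 I k j)"
      proof (rule sum.cong)
        fix k
        have tk: "th k \<noteq> 0" using thp[of k] by simp
        show "real (pn P) * yk P u0 I k j / th k / S / real (pn P) = w k * yk P u0 I k j"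
          using tk n0 Sp by (simp add: w_def field_simps)
      qed simp
      finally show ?thesis .
    qed
    also have "(\<Sum>k=K0..K. w k * (- Gk k)) - (\<Sum>k=K0..K. w k * yk P u0 I k j) = RHS"
      unfolding RHS_def sum_subtractf[symmetric] yk by (rule sum.cong) (simp_all add: algebra_simps)
    finally show ?thesis by simp
  next
    case b
    have "infeas P (xhat P u0 I K0 K) (yhat P u0 I K0 K) j = cf P j (xhat P u0 I K0 K)"
      using b by (simp add: infeas_def cf_def)
    also have "\<dots> = (\<Sum>k=K0..K. w k * (- Gk k))" unfolding xh using lin b by (simp add: cfx)
    also have "\<dots> = RHS" unfolding RHS_def
      by (rule sum.cong) (use dl_rel(1)[OF j] b in \<open>simp_all add: Gk_def c_def \<delta>_def\<close>)
    finally show ?thesis by simp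
  next
    case g
    define i where "i = j - pn P - pp P"
    have i: "i < pm P" using g j by (simp add: i_def nh_def)
    have cv: "convex_on UNIV (pg P i)" using A1_facts(4)[OF A1 i] .
    have "pg P i (\<Sum>k\<in>{K0..K}. w k *\<^sub>R x k) \<le> (\<Sum>k\<in>{K0..K}. w k * pg P i (x k))"
      using convex_on_sum[OF _ _ cv sw] w0 K by auto
    also have "\<dots> \<le> RHS" unfolding RHS_def
    proof (rule sum_mono)
      fix k assume "k \<in> {K0..K}"
      have "pg P i (x k) = - Gk k" using cfx[of k] g by (simp add: cf_def i_def)
      also have "\<dots> \<le> 2 * c k * \<delta> k" using dl_rel(2)[OF j] g by (simp add: Gk_def c_def \<delta>_def)
      finally show "w k * pg P i (x k) \<le> w k * (2 * c k * \<delta> k)" using w0 by (rule mult_left_mono)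
    qed
    finally have le: "pg P i (xhat P u0 I K0 K) \<le> RHS" unfolding xh .
    have inf: "infeas P (xhat P u0 I K0 K) (yhat P u0 I K0 K) j = max 0 (pg P i (xhat P u0 I K0 K))"
      using g by (simp add: infeas_def i_def)
    show ?thesis
    proof (cases "RHS \<ge> 0")
      case True
      have "max 0 (pg P i (xhat P u0 I K0 K)) \<le> RHS" using le True by simp
      hence "(max 0 (pg P i (xhat P u0 I K0 K)))\<^sup>2 \<le> RHS\<^sup>2" by (intro power_mono) auto
      thus ?thesis using inf by simp
    next
      case False
      hence "max 0 (pg P i (xhat P u0 I K0 K)) = 0" using le by simp
      thus ?thesis using inf by simp
    qed
  qed
  thus ?thesis unfolding RHS_eq .
qed

lemma normL_dual_bound:
  fixes I :: "nat \<Rightarrow> nat"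
  assumes K: "K0 \<le> K"
  defines "S \<equiv> (\<Sum>k=K0..K. 1 / th k)"
  shows "(normL_dual P (infeas P (xhat P u0 I K0 K) (yhat P u0 I K0 K)))\<^sup>2
     \<le> 4 * (real N)\<^sup>2 / S\<^sup>2 * (\<Sum>j<N. Lc P j * (\<Sum>k=K0..K. dl I k j)\<^sup>2)"
proof -
  define f where "f = infeas P (xhat P u0 I K0 K) (yhat P u0 I K0 K)"
  have nn: "(\<Sum>i<N. (f i)\<^sup>2 / Lc P i) \<ge> 0" using Lpos by (intro sum_nonneg) (simp add: less_imp_le)
  have "(normL_dual P f)\<^sup>2 = (\<Sum>i<N. (f i)\<^sup>2 / Lc P i)" unfolding normL_dual_def using nn by simp
  also have "\<dots> \<le> (\<Sum>j<N. 4 * (real N)\<^sup>2 / S\<^sup>2 * (Lc P j * (\<Sum>k=K0..K. dl I k j)\<^sup>2))"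
  proof (rule sum_mono)
    fix j assume "j \<in> {..<N}"
    hence j: "j < N" by simp
    have L: "Lc P j > 0" using Lpos j by simp
    have "(f j)\<^sup>2 / Lc P j \<le> (2 * real N * Lc P j / S * (\<Sum>k=K0..K. dl I k j))\<^sup>2 / Lc P j"
      using infeas_bound[OF K j, of I] L unfolding f_def S_def by (simp add: divide_right_mono)
    also have "\<dots> = 4 * (real N)\<^sup>2 / S\<^sup>2 * (Lc P j * (\<Sum>k=K0..K. dl I k j)\<^sup>2)"
      using L by (simp add: power2_eq_square field_simps)
    finally show "(f j)\<^sup>2 / Lc P j \<le> 4 * (real N)\<^sup>2 / S\<^sup>2 * (Lc P j * (\<Sum>k=K0..K. dl I k j)\<^sup>2)" .
  qed
  also have "\<dots> = 4 * (real N)\<^sup>2 / S\<^sup>2 * (\<Sum>j<N. Lc P j * (\<Sum>k=K0..K. dl I k j)\<^sup>2)"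
    by (simp add: sum_distrib_left)
  finally show ?thesis unfolding f_def .
qed

end


lemma Dfun_fin_coords:
  assumes "Dfun P u < \<infinity>" "j < nh P"
  shows "hfun P j (u j) < \<infinity>"
proof (rule ccontr)
  assume "\<not> hfun P j (u j) < \<infinity>"
  hence "hfun P j (u j) = \<infinity>" by simp
  hence "(\<Sum>i<nh P. hfun P i (u i)) = \<infinity>" using assms(2) by (subst sum_Pinfty) auto
  hence "Dfun P u = \<infinity>" by (simp add: Dfun_def)
  thus False using assms(1) by simp
qed

theorem lemma8:
  fixes P :: "('a::euclidean_space) dprob"
    and u0 ustar :: "nat \<Rightarrow> real"
    and K0 K :: nat
  assumes A1: "assumption1 P"
    and Lpos: "\<forall>i<nh P. Lc P i > 0"
    and u0D: "u0 \<in> dualD P"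
    and umin: "\<forall>u. Dfun P ustar \<le> Dfun P u"
    and K0K: "K0 \<le> K"
  shows "Dfun P u0 < \<infinity> \<longrightarrow>
    sqrt (expect_xi (nh P) K
            (\<lambda>I. (normL_dual P (infeas P (xhat P u0 I K0 K) (yhat P u0 I K0 K)))\<^sup>2))
    \<le> sqrt 48 * (real (nh P))\<^sup>2
        * sqrt ((1 - theta (nh P) 0) * real_of_ereal (Dfun P u0 - Dfun P ustar) + (normL P (\<lambda>i. u0 i - ustar i))\<^sup>2)
        / (1 / (theta (nh P) K)\<^sup>2 - inv_theta_sq_prev (nh P) K0)"
proof
  assume D0: "Dfun P u0 < \<infinity>"
  have u0fin: "\<forall>j<nh P. hfun P j (u0 j) < \<infinity>" using Dfun_fin_coords[OF D0] by blast
  have Dst_fin: "Dfun P ustar < \<infinity>" using umin D0 by (meson le_less_trans)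
  have usfin: "\<forall>j<nh P. hfun P j (ustar j) < \<infinity>" using Dfun_fin_coords[OF Dst_fin] by blast
  interpret actx3 P u0 ustar
    by unfold_locales (use A1 u0fin Lpos usfin umin in auto)
  have N1': "nh P \<ge> 1" using N1 by simp
  define S where "S = (\<Sum>k=K0..K. 1 / theta (nh P) k)"
  have Sp: "S > 0" unfolding S_def by (rule sum_inv_theta_pos[OF N1' K0K])
  have S_eq: "S = 1 / (theta (nh P) K)\<^sup>2 - inv_theta_sq_prev (nh P) K0" unfolding S_def by (rule sum_inv_theta[OF N1' K0K])
  define C where "C = (1 - theta (nh P) 0) * real_of_ereal (Dfun P u0 - Dfun P ustar) + (normL P (\<lambda>i. u0 i - ustar i))\<^sup>2"
  have Psi0_eq: "Psi0 = (real (nh P))\<^sup>2 * C"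
  proof -
    define I0 where "I0 = (\<lambda>_::nat. undefined :: nat)"
    have D0e: "Dfun P u0 = ereal (dfun P u0 + (\<Sum>j<nh P. Hr P j (u0 j)))"
      by (rule Dfun_fin) (use u0fin in blast)
    have Dse: "Dfun P ustar = ereal Dst"
      unfolding Dst_def by (rule Dfun_fin) (use usfin in blast)
    have Phi0: "Phi I0 0 = real_of_ereal (Dfun P u0 - Dfun P ustar)"
      unfolding D0e Dse by (simp add: Phi_def uk_0)
    have nn: "(\<Sum>i<nh P. Lc P i * (u0 i - ustar i)\<^sup>2) \<ge> 0"
      using Lpos by (intro sum_nonneg) (simp add: less_imp_le)
    have Rn0: "Rn I0 0 = (normL P (\<lambda>i. u0 i - ustar i))\<^sup>2"
      unfolding normL_def Rn_def using nn by (simp add: zk_0)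
    have ib0: "inv_theta_sq_prev (nh P) 0 = (real (nh P))\<^sup>2 * (1 - theta (nh P) 0)"
      using N1' by (simp add: inv_theta_sq_prev_def power2_eq_square field_simps)
    show ?thesis unfolding Psi0_def Psi_def I0_def[symmetric] Phi0 Rn0 C_def ib0
      by (simp add: algebra_simps)
  qed
  have C0: "C \<ge> 0"
  proof -
    have "(real (nh P))\<^sup>2 * C \<ge> 0" using Psi0_nonneg Psi0_eq by simp
    moreover have "(real (nh P))\<^sup>2 > 0" using N1' by simp
    ultimately show ?thesis by (simp add: zero_le_mult_iff)
  qed
  define X where "X = (\<lambda>I. (normL_dual P (infeas P (xhat P u0 I K0 K) (yhat P u0 I K0 K)))\<^sup>2)"
  define Y where "Y = (\<lambda>I. \<Sum>j<nh P. Lc P j * (\<Sum>k=K0..K. dl I k j)\<^sup>2)"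
  have "expect_xi (nh P) K X = EE (nh P) (Suc K) X" by (rule expect_xi_Ex)
  also have "\<dots> \<le> EE (nh P) (Suc K) (\<lambda>I. 4 * (real (nh P))\<^sup>2 / S\<^sup>2 * Y I)"
    by (rule EE_mono[OF N1']) (use normL_dual_bound[OF K0K] in \<open>simp add: X_def Y_def S_def\<close>)
  also have "\<dots> = 4 * (real (nh P))\<^sup>2 / S\<^sup>2 * EE (nh P) (Suc K) Y" by (rule EE_cmult[OF N1'])
  also have "\<dots> \<le> 4 * (real (nh P))\<^sup>2 / S\<^sup>2 * (12 * Psi0)"
    by (rule mult_left_mono) (use main_bound[OF K0K] in \<open>simp_all add: Y_def\<close>)
  also have "\<dots> = (sqrt 48 * (real (nh P))\<^sup>2 * sqrt C / S)\<^sup>2"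
    using C0 Sp unfolding Psi0_eq by (simp add: power_mult_distrib power_divide field_simps power2_eq_square)
  finally have "expect_xi (nh P) K X \<le> (sqrt 48 * (real (nh P))\<^sup>2 * sqrt C / S)\<^sup>2" .
  hence "sqrt (expect_xi (nh P) K X) \<le> sqrt ((sqrt 48 * (real (nh P))\<^sup>2 * sqrt C / S)\<^sup>2)" by (rule real_sqrt_le_mono)
  also have "\<dots> = sqrt 48 * (real (nh P))\<^sup>2 * sqrt C / S" using C0 Sp by simp
  finally show "sqrt (expect_xi (nh P) K
            (\<lambda>I. (normL_dual P (infeas P (xhat P u0 I K0 K) (yhat P u0 I K0 K)))\<^sup>2))
    \<le> sqrt 48 * (real (nh P))\<^sup>2
        * sqrt ((1 - theta (nh P) 0) * real_of_ereal (Dfun P u0 - Dfun P ustar) + (normL P (\<lambda>i. u0 i - ustar i))\<^sup>2)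
        / (1 / (theta (nh P) K)\<^sup>2 - inv_theta_sq_prev (nh P) K0)"
    unfolding X_def[symmetric] C_def[symmetric] S_eq[symmetric] .
qed


end
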